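(* Let $1\le a\le b\le c$ be integers and $K=K_{a,b,c}$. Suppose $\epsilon>0$, $d\ge 2bc^2\epsilon$, and $n$ is sufficiently large. Let $H$ be a $3$-graph on $n$ vertices with an $(\epsilon,t)$-regular partition $\mathcal P$ and cluster hypergraph $\mathcal R=\mathcal R(\epsilon,d,\mathcal P)$. Suppose that there is a fractional hom$(K)$-tiling $h$ of $\mathcal R$ with $h_{\min}\ge\frac1{bc^2}$. Then there exists a $K$-tiling of $H$ that covers at least $(1-2bc^3\epsilon)\,w(h)\,n/t$ vertices.
   Context: $K_{a,b,c}$ is the complete $3$-partite $3$-graph with parts of sizes $a,b,c$; a $K$-tiling is a collection of vertex-disjoint copies of $K$. For disjoint nonempty $V_1,V_2,V_3\subseteq V(H)$, $d(V_1,V_2,V_3)$ is the number of edges with one vertex in each $V_i$ divided by $|V_1||V_2||V_3|$; $(V_1,V_2,V_3)$ is $(\epsilon,d)$-regular if $|d(A_1,A_2,A_3)-d|\le\epsilon$ for all $A_i\subseteq V_i$ with $|A_i|\ge\epsilon|V_i|$, and $\epsilon$-regular if it is $(\epsilon,d)$-regular for some $d\ge0$. An $(\epsilon,t)$-regular partition of $H$ is a partition $V(H)=V_0\cup V_1\cup\dots\cup V_t$ with $|V_1|=\dots=|V_t|$, $|V_0|\le\epsilon n$, and all but at most $\epsilon\binom t3$ triples $\{i,j,l\}\in\binom{[t]}3$ having $(V_i,V_j,V_l)$ $\epsilon$-regular. The cluster hypergraph $\mathcal R(\epsilon,d,\mathcal P)$ is the $3$-graph on vertex set $\{V_1,\dots,V_t\}$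 in which $\{V_i,V_j,V_l\}$ is an edge iff $(V_i,V_j,V_l)$ is $\epsilon$-regular and $d(V_i,V_j,V_l)\ge d$. For a $3$-graph $G=(V,E)$, a function $h:V\times E\to[0,1]$ is a fractional hom$(K)$-tiling of $G$ if (1) $h(v,e)=0$ whenever $v\notin e$; (2) $h(v)=\sum_{e\in E}h(v,e)\le1$ for all $v$; (3) every $e\in E$ has a labeling $e=uvw$ with $h(u,e)\le h(v,e)\le h(w,e)$ and $\frac{h(u,e)}a\ge\frac{h(v,e)}b\ge\frac{h(w,e)}c$. Here $h_{\min}$ is the smallest nonzero value of $h(v,e)$ and $w(h)=\sum_{(v,e)\in V\times E}h(v,e)$. *)

theory Defs
  imports Complex_Main
begin

definition three_graph :: "'a set \<Rightarrow> 'a set set \<Rightarrow> bool" where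
  "three_graph V E \<longleftrightarrow> finite V \<and> (\<forall>e\<in>E. e \<subseteq> V \<and> card e = 3)"

definition density :: "'a set set \<Rightarrow> 'a set \<Rightarrow> 'a set \<Rightarrow> 'a set \<Rightarrow> real" where
  "density E V1 V2 V3 =
     real (card {e\<in>E. \<exists>x\<in>V1. \<exists>y\<in>V2. \<exists>z\<in>V3. e = {x, y, z}})
     / (real (card V1) * real (card V2) * real (card V3))"

definition eps_d_regular :: "'a set set \<Rightarrow> real \<Rightarrow> real \<Rightarrow> 'a set \<Rightarrow> 'a set \<Rightarrow> 'a set \<Rightarrow> bool" where
  "eps_d_regular E \<epsilon> d V1 V2 V3 \<longleftrightarrow>
     (\<forall>A1 A2 A3. A1 \<subseteq> V1 \<and> A2 \<subseteq> V2 \<and> A3 \<subseteq> V3 \<and>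
        real (card A1) \<ge> \<epsilon> * real (card V1) \<and>
        real (card A2) \<ge> \<epsilon> * real (card V2) \<and>
        real (card A3) \<ge> \<epsilon> * real (card V3) \<longrightarrow>
        \<bar>density E A1 A2 A3 - d\<bar> \<le> \<epsilon>)"

definition eps_regular :: "'a set set \<Rightarrow> real \<Rightarrow> 'a set \<Rightarrow> 'a set \<Rightarrow> 'a set \<Rightarrow> bool" where
  "eps_regular E \<epsilon> V1 V2 V3 \<longleftrightarrow> (\<exists>d\<ge>0. eps_d_regular E \<epsilon> d V1 V2 V3)"

text \<open>(\<epsilon>,t)-regular partition V = P 0 \<union> P 1 \<union> ... \<union> P t (P 0 is the exceptional set V_0).\<close>
definition regular_partition ::
  "'a set \<Rightarrow> 'a set set \<Rightarrow> real \<Rightarrow> nat \<Rightarrow> (nat \<Rightarrow> 'a set) \<Rightarrow> bool" where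
  "regular_partition V E \<epsilon> t P \<longleftrightarrow>
     V = (\<Union>i\<in>{0..t}. P i) \<and>
     (\<forall>i\<in>{0..t}. \<forall>j\<in>{0..t}. i \<noteq> j \<longrightarrow> P i \<inter> P j = {}) \<and>
     (\<forall>i\<in>{1..t}. P i \<noteq> {}) \<and>
     (\<forall>i\<in>{1..t}. \<forall>j\<in>{1..t}. card (P i) = card (P j)) \<and>
     real (card (P 0)) \<le> \<epsilon> * real (card V) \<and>
     real (card {T. T \<subseteq> {1..t} \<and> card T = 3 \<and>
                \<not> (\<exists>i j l. T = {i, j, l} \<and> eps_regular E \<epsilon> (P i) (P j) (P l))})
       \<le> \<epsilon> * real (t choose 3)"

text \<open>Edges of the cluster hypergraph R(\<epsilon>,d,P); cluster V_i is represented by its index i \<in> {1..t}.\<close>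
definition cluster_edges ::
  "'a set set \<Rightarrow> real \<Rightarrow> real \<Rightarrow> nat \<Rightarrow> (nat \<Rightarrow> 'a set) \<Rightarrow> nat set set" where
  "cluster_edges E \<epsilon> d t P =
     {{i, j, l} | i j l. i \<in> {1..t} \<and> j \<in> {1..t} \<and> l \<in> {1..t} \<and>
        i \<noteq> j \<and> j \<noteq> l \<and> i \<noteq> l \<and>
        eps_regular E \<epsilon> (P i) (P j) (P l) \<and> density E (P i) (P j) (P l) \<ge> d}"

definition frac_hom_tiling ::
  "nat \<Rightarrow> nat \<Rightarrow> nat \<Rightarrow> 'v set \<Rightarrow> 'v set set \<Rightarrow> ('v \<Rightarrow> 'v set \<Rightarrow> real) \<Rightarrow> bool" where
  "frac_hom_tiling a b c VG EG h \<longleftrightarrow>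
     (\<forall>v\<in>VG. \<forall>e\<in>EG. 0 \<le> h v e \<and> h v e \<le> 1) \<and>
     (\<forall>v\<in>VG. \<forall>e\<in>EG. v \<notin> e \<longrightarrow> h v e = 0) \<and>
     (\<forall>v\<in>VG. (\<Sum>e\<in>EG. h v e) \<le> 1) \<and>
     (\<forall>e\<in>EG. \<exists>u v w. e = {u, v, w} \<and> u \<noteq> v \<and> v \<noteq> w \<and> u \<noteq> w \<and>
        h u e \<le> h v e \<and> h v e \<le> h w e \<and>
        h u e / real a \<ge> h v e / real b \<and> h v e / real b \<ge> h w e / real c)"

definition tiling_weight :: "'v set \<Rightarrow> 'v set set \<Rightarrow> ('v \<Rightarrow> 'v set \<Rightarrow> real) \<Rightarrow> real" where
  "tiling_weight VG EG h = (\<Sum>v\<in>VG. \<Sum>e\<in>EG. h v e)"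

definition hmin_ge :: "'v set \<Rightarrow> 'v set set \<Rightarrow> ('v \<Rightarrow> 'v set \<Rightarrow> real) \<Rightarrow> real \<Rightarrow> bool" where
  "hmin_ge VG EG h m \<longleftrightarrow> (\<forall>v\<in>VG. \<forall>e\<in>EG. h v e \<noteq> 0 \<longrightarrow> m \<le> h v e)"

definition K_copy :: "nat \<Rightarrow> nat \<Rightarrow> nat \<Rightarrow> 'a set \<Rightarrow> 'a set set \<Rightarrow> 'a set \<times> 'a set \<times> 'a set \<Rightarrow> bool" where
  "K_copy a b c V E K \<longleftrightarrow> (case K of (X, Y, Z) \<Rightarrow>
     X \<subseteq> V \<and> Y \<subseteq> V \<and> Z \<subseteq> V \<and>
     X \<inter> Y = {} \<and> Y \<inter> Z = {} \<and> X \<inter> Z = {} \<and>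
     card X = a \<and> card Y = b \<and> card Z = c \<and>
     (\<forall>x\<in>X. \<forall>y\<in>Y. \<forall>z\<in>Z. {x, y, z} \<in> E))"

definition copy_verts :: "'a set \<times> 'a set \<times> 'a set \<Rightarrow> 'a set" where
  "copy_verts K = (case K of (X, Y, Z) \<Rightarrow> X \<union> Y \<union> Z)"

definition K_tiling :: "nat \<Rightarrow> nat \<Rightarrow> nat \<Rightarrow> 'a set \<Rightarrow> 'a set set \<Rightarrow> ('a set \<times> 'a set \<times> 'a set) set \<Rightarrow> bool" where
  "K_tiling a b c V E \<T> \<longleftrightarrow>
     (\<forall>K\<in>\<T>. K_copy a b c V E K) \<and>
     (\<forall>K\<in>\<T>. \<forall>K'\<in>\<T>. K \<noteq> K' \<longrightarrow> copy_verts K \<inter> copy_verts K' = {})"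

definition covered :: "('a set \<times> 'a set \<times> 'a set) set \<Rightarrow> 'a set" where
  "covered \<T> = (\<Union>K\<in>\<T>. copy_verts K)"

end

theory Submission
  imports Defs
begin


lemma common_subset:
  fixes p :: real and k :: nat and L :: "'b \<Rightarrow> 'a set"
  assumes p: "p > 0" and p1: "p \<le> 1" and k: "k \<ge> 1"
    and S: "finite S" and Sbig: "real (card S) \<ge> 2 * real k / p"
    and T: "finite T" and L: "\<forall>\<tau>\<in>T. L \<tau> \<subseteq> S"
    and sm: "(\<Sum>\<tau>\<in>T. real (card (L \<tau>))) \<ge> p * card S * card T"
  shows "\<exists>K\<subseteq>S. card K = k \<and> real (card {\<tau>\<in>T. K \<subseteq> L \<tau>}) \<ge> (p/2)*(p/(2 * real k))^k * card T"
proof -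
  define T' where "T' = {\<tau>\<in>T. real(card(L \<tau>)) \<ge> p*card S/2}"
  have kpos: "real k > 0" using k by simp
  have Spos: "real (card S) > 0"
  proof -
    have "2*k/p > 0" using p kpos by simp
    then show ?thesis using Sbig by linarith
  qed
  have fT': "finite T'" using T unfolding T'_def by simp
  have T'sub: "T' \<subseteq> T" unfolding T'_def by auto
  have "(\<Sum>\<tau>\<in>T. real (card (L \<tau>))) = (\<Sum>\<tau>\<in>T'. real (card (L \<tau>))) + (\<Sum>\<tau>\<in>T-T'. real (card (L \<tau>)))"
    using T T'sub by (metis sum.subset_diff add.commute)
  also have "\<dots> \<le> (\<Sum>\<tau>\<in>T'. real (card S)) + (\<Sum>\<tau>\<in>T-T'. p*card S/2)"
  proof (rule add_mono)
    show "(\<Sum>\<tau>\<in>T'. real (card (L \<tau>))) \<le> (\<Sum>\<tau>\<in>T'. real (card S))"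
      apply (rule sum_mono) using L T'sub S by (auto intro: card_mono)
    show "(\<Sum>\<tau>\<in>T-T'. real (card (L \<tau>))) \<le> (\<Sum>\<tau>\<in>T-T'. p*card S/2)"
      apply (rule sum_mono) unfolding T'_def by auto
  qed
  also have "\<dots> = card T' * card S + card (T-T') * (p*card S/2)" by simp
  also have "\<dots> \<le> card T' * card S + card T * (p*card S/2)"
  proof -
    have "card (T-T') \<le> card T" using T by (simp add: card_mono)
    moreover have "p*card S/2 \<ge> 0" using p by simp
    ultimately show ?thesis by (simp add: mult_right_mono)
  qed
  finally have "p * card S * card T \<le> card T' * card S + card T * (p*card S/2)" using sm by linarith
  then have "(p/2 * card T) * card S \<le> card T' * card S" by (simp add: algebra_simps)
  then have T'big: "p/2 * card T \<le> card T'" using Spos by simp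
  define Ks where "Ks = {K. K \<subseteq> S \<and> card K = k}"
  have fKs: "finite Ks" unfolding Ks_def using S by simp
  have cKs: "card Ks = card S choose k" unfolding Ks_def using n_subsets[OF S] by simp
  define cnt where "cnt K = card {\<tau>\<in>T. K \<subseteq> L \<tau>}" for K
  have swap: "(\<Sum>K\<in>Ks. real (cnt K)) = (\<Sum>\<tau>\<in>T. real (card (L \<tau>) choose k))"
  proof -
    have "(\<Sum>K\<in>Ks. real (cnt K)) = (\<Sum>K\<in>Ks. \<Sum>\<tau>\<in>T. if K \<subseteq> L \<tau> then 1 else 0)"
      unfolding cnt_def using T by (simp add: sum.If_cases Int_def)
    also have "\<dots> = (\<Sum>\<tau>\<in>T. \<Sum>K\<in>Ks. if K \<subseteq> L \<tau> then 1 else 0)" by (rule sum.swap)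
    also have "\<dots> = (\<Sum>\<tau>\<in>T. real (card (L \<tau>) choose k))"
    proof (rule sum.cong[OF refl])
      fix \<tau> assume t: "\<tau> \<in> T"
      have "{K\<in>Ks. K \<subseteq> L \<tau>} = {K. K \<subseteq> L \<tau> \<and> card K = k}" unfolding Ks_def using L t by auto
      moreover have "finite (L \<tau>)" using L t S finite_subset by blast
      ultimately have "card {K\<in>Ks. K \<subseteq> L \<tau>} = card (L \<tau>) choose k" using n_subsets by metis
      then show "(\<Sum>K\<in>Ks. if K \<subseteq> L \<tau> then 1 else 0) = real (card (L \<tau>) choose k)"
        using fKs by (simp add: sum.If_cases Int_def)
    qed
    finally show ?thesis .
  qed
  have "2*k/p \<ge> 2*k" using p p1 kpos by (simp add: field_simps mult_left_le)
  then have kS: "real k \<le> real (card S)" using Sbig kpos by linarith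
  define x where "x = p * card S / (2*k)"
  have xk: "x \<ge> 1" unfolding x_def using Sbig p kpos by (simp add: field_simps)
  have lowb: "real (card (L \<tau>) choose k) \<ge> x ^ k" if "\<tau> \<in> T'" for \<tau>
  proof -
    have c: "real (card (L \<tau>)) \<ge> p*card S/2" using that unfolding T'_def by simp
    have kk: "real k \<le> p*card S/2" using Sbig p by (simp add: field_simps)
    have kle: "k \<le> card (L \<tau>)" using c kk by linarith
    have "x \<le> real (card (L \<tau>)) / real k" unfolding x_def using c kpos by (simp add: field_simps)
    then have "x^k \<le> (real (card (L \<tau>)) / real k)^k" using xk by (intro power_mono) auto
    also have "\<dots> \<le> real (card (L \<tau>) choose k)" by (rule binomial_ge_n_over_k_pow_k[OF kle])
    finally show ?thesis .
  qed
  have a1: "(\<Sum>\<tau>\<in>T. real (card (L \<tau>) choose k)) \<ge> (\<Sum>\<tau>\<in>T'. real (card (L \<tau>) choose k))"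
    using T T'sub by (intro sum_mono2) auto
  have a2: "(\<Sum>\<tau>\<in>T'. real (card (L \<tau>) choose k)) \<ge> card T' * x^k"
    using sum_mono[of T' "\<lambda>_. x^k" "\<lambda>\<tau>. real (card (L \<tau>) choose k)"] lowb by simp
  have a3: "card T' * x^k \<ge> (p/2 * card T) * x^k" using T'big xk by (intro mult_right_mono) auto
  have a4: "x^k = (p/(2*k))^k * real (card S) ^ k"
  proof -
    have "x = (p/(2*k)) * card S" unfolding x_def by simp
    then show ?thesis by (simp only: power_mult_distrib)
  qed
  have a5: "real (card S) ^ k \<ge> real (card S choose k)"
  proof -
    have "k \<le> card S" using kS by simp
    then have "card S choose k \<le> card S ^ k" using binomial_le_pow by blast
    then show ?thesis by (metis of_nat_le_iff of_nat_power)
  qed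
  define q where "q = (p/2)*(p/(2 * real k))^k * card T"
  have q0: "q \<ge> 0" unfolding q_def using p by simp
  have "q * real (card S choose k) \<le> q * real (card S) ^ k"
    using a5 q0 by (rule mult_left_mono)
  also have "\<dots> = p / 2 * real (card T) * x ^ k" unfolding q_def a4 by simp
  finally have big: "(\<Sum>K\<in>Ks. real (cnt K)) \<ge> q * card Ks"
    unfolding swap cKs using a1 a2 a3 by linarith
  have KsNE: "Ks \<noteq> {}"
  proof -
    have "k \<le> card S" using kS by simp
    then obtain K where "K \<subseteq> S" "card K = k" by (meson obtain_subset_with_card_n)
    then show ?thesis unfolding Ks_def by auto
  qed
  show ?thesis
  proof (rule ccontr)
    assume "\<not> ?thesis"
    note neg = this
    have lt: "\<forall>K\<in>Ks. real (cnt K) < q"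
    proof
      fix K assume "K \<in> Ks"
      then have K: "K \<subseteq> S" "card K = k" by (auto simp: Ks_def)
      have "\<not> (q \<le> real (cnt K))" using neg K unfolding cnt_def q_def by blast
      then show "real (cnt K) < q" by simp
    qed
    have "(\<Sum>K\<in>Ks. real (cnt K)) < (\<Sum>K\<in>Ks. q)"
      using lt by (intro sum_strict_mono[OF fKs KsNE]) auto
    moreover have "(\<Sum>K\<in>Ks. q) = q * card Ks" by simp
    ultimately show False using big by linarith
  qed
qed


lemma card_pairs:
  assumes "finite A" "finite B"
  shows "card {(a,b). a\<in>A \<and> b\<in>B \<and> P a b} = (\<Sum>b\<in>B. card {a\<in>A. P a b})"
proof -
  have eq: "{(a,b). a\<in>A \<and> b\<in>B \<and> P a b} = (\<Union>b\<in>B. (\<lambda>a. (a,b)) ` {a\<in>A. P a b})" by auto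
  have "card (\<Union>b\<in>B. (\<lambda>a. (a,b)) ` {a\<in>A. P a b}) = (\<Sum>b\<in>B. card ((\<lambda>a. (a,b)) ` {a\<in>A. P a b}))"
    using assms by (intro card_UN_disjoint) auto
  also have "\<dots> = (\<Sum>b\<in>B. card {a\<in>A. P a b})"
    by (intro sum.cong refl card_image) (auto simp: inj_on_def)
  finally show ?thesis using eq by simp
qed

lemma bip_complete:
  fixes p :: real
  assumes p: "p > 0" "p \<le> 1" and k: "k2 \<ge> 1"
    and f: "finite A2" "finite A3"
    and s2: "real (card A2) \<ge> 2*real k2/p"
    and s3: "real (card A3) \<ge> k3 / ((p/2)*(p/(2*real k2))^k2)"
    and cnt: "(\<Sum>z\<in>A3. real (card {y\<in>A2. R y z})) \<ge> p*card A2*card A3"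
  shows "\<exists>Y\<subseteq>A2. \<exists>Z\<subseteq>A3. card Y = k2 \<and> card Z = k3 \<and> (\<forall>y\<in>Y. \<forall>z\<in>Z. R y z)"
proof -
  obtain Y where Y: "Y \<subseteq> A2" "card Y = k2"
    and c: "real (card {z\<in>A3. Y \<subseteq> {y\<in>A2. R y z}}) \<ge> (p/2)*(p/(2*real k2))^k2 * card A3"
    using common_subset[OF p k f(1) s2 f(2), of "\<lambda>z. {y\<in>A2. R y z}"] cnt by auto
  define q where "q = (p/2)*(p/(2*real k2))^k2"
  have q: "q > 0" unfolding q_def using p k by simp
  have "k3 / q \<le> card A3" using s3 unfolding q_def .
  then have "real k3 \<le> q * card A3" using q by (simp add: divide_le_eq mult.commute)
  then have "k3 \<le> card {z\<in>A3. Y \<subseteq> {y\<in>A2. R y z}}" using c unfolding q_def by linarith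
  then obtain Z where Z: "Z \<subseteq> {z\<in>A3. Y \<subseteq> {y\<in>A2. R y z}}" "card Z = k3"
    by (meson obtain_subset_with_card_n)
  show ?thesis using Y Z by (intro exI[of _ Y] conjI exI[of _ Z]) auto
qed

lemma erdos3:
  fixes p :: real
  assumes p: "p > 0" "p \<le> 1" and k: "k1 \<ge> 1" "k2 \<ge> 1" "k3 \<ge> 1"
  shows "\<exists>N::nat. \<forall>(A1::'a set) (A2::'a set) (A3::'a set) Q. finite A1 \<and> finite A2 \<and> finite A3 \<and>
     card A1 \<ge> N \<and> card A2 \<ge> N \<and> card A3 \<ge> N \<and>
     real (card {(x,y,z). x\<in>A1 \<and> y\<in>A2 \<and> z\<in>A3 \<and> Q x y z}) \<ge> p * card A1 * card A2 * card A3 \<longrightarrow>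
     (\<exists>X\<subseteq>A1. \<exists>Y\<subseteq>A2. \<exists>Z\<subseteq>A3. card X = k1 \<and> card Y = k2 \<and> card Z = k3 \<and>
        (\<forall>x\<in>X. \<forall>y\<in>Y. \<forall>z\<in>Z. Q x y z))"
proof -
  define q where "q = (p/2)*(p/(2*real k1))^k1"
  have q: "q > 0" "q \<le> 1"
  proof -
    show "q > 0" unfolding q_def using p k by simp
    have "p/(2*real k1) \<le> 1" using p k by (simp add: field_simps)
    moreover have "p/(2*real k1) \<ge> 0" using p by simp
    ultimately have "(p/(2*real k1))^k1 \<le> 1" by (simp add: power_le_one)
    moreover have "p/2 \<le> 1" using p by simp
    ultimately show "q \<le> 1" unfolding q_def using p
      by (intro mult_le_one) auto
  qed
  define N where "N = nat \<lceil>max (2*real k1/p) (max (2*real k2/q) (k3 / ((q/2)*(q/(2*real k2))^k2)))\<rceil>"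
  show ?thesis
  proof (intro exI[of _ N] allI impI, elim conjE)
    fix A1 A2 A3 :: "'a set" and Q
    assume f: "finite A1" "finite A2" "finite A3" and c1: "card A1 \<ge> N" and c2: "card A2 \<ge> N"
      and c3: "card A3 \<ge> N"
      and cnt: "real (card {(x,y,z). x\<in>A1 \<and> y\<in>A2 \<and> z\<in>A3 \<and> Q x y z}) \<ge> p * card A1 * card A2 * card A3"
    have Nge: "real N \<ge> max (2*real k1/p) (max (2*real k2/q) (k3 / ((q/2)*(q/(2*real k2))^k2)))"
      unfolding N_def by linarith
    have s1: "real (card A1) \<ge> 2*real k1/p"
    proof -
      have "2*real k1/p \<le> real N" using Nge by simp
      moreover have "real N \<le> real (card A1)" using c1 by simp
      ultimately show ?thesis by linarith
    qed
    have s2: "real (card A2) \<ge> 2*real k2/q"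
    proof -
      have "2*real k2/q \<le> real N" using Nge by simp
      moreover have "real N \<le> real (card A2)" using c2 by simp
      ultimately show ?thesis by linarith
    qed
    have s3: "real (card A3) \<ge> k3 / ((q/2)*(q/(2*real k2))^k2)"
    proof -
      have "k3 / ((q/2)*(q/(2*real k2))^k2) \<le> real N" using Nge by simp
      moreover have "real N \<le> real (card A3)" using c3 by simp
      ultimately show ?thesis by linarith
    qed
    define T where "T = A2 \<times> A3"
    define L where "L \<tau> = {x\<in>A1. Q x (fst \<tau>) (snd \<tau>)}" for \<tau>
    have fT: "finite T" unfolding T_def using f by simp
    have trip: "{(x,y,z). x\<in>A1 \<and> y\<in>A2 \<and> z\<in>A3 \<and> Q x y z} = {(x,\<tau>). x\<in>A1 \<and> \<tau>\<in>T \<and> Q x (fst \<tau>) (snd \<tau>)}"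
      unfolding T_def by auto
    have "(\<Sum>\<tau>\<in>T. real (card (L \<tau>))) = real (card {(x,y,z). x\<in>A1 \<and> y\<in>A2 \<and> z\<in>A3 \<and> Q x y z})"
      unfolding trip L_def using card_pairs[OF f(1) fT, of "\<lambda>x \<tau>. Q x (fst \<tau>) (snd \<tau>)"] by simp
    also have "card T = card A2 * card A3" unfolding T_def by (simp add: card_cartesian_product)
    ultimately have sm: "(\<Sum>\<tau>\<in>T. real (card (L \<tau>))) \<ge> p * card A1 * card T" using cnt by simp
    obtain X where X: "X \<subseteq> A1" "card X = k1" and cX: "real (card {\<tau>\<in>T. X \<subseteq> L \<tau>}) \<ge> q * card T"
      using common_subset[OF p k(1) f(1) s1 fT, of L] sm unfolding q_def L_def by auto
    have "{\<tau>\<in>T. X \<subseteq> L \<tau>} = {(y,z). y\<in>A2 \<and> z\<in>A3 \<and> (\<forall>x\<in>X. Q x y z)}"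
      unfolding T_def L_def using X by auto
    then have "(\<Sum>z\<in>A3. real (card {y\<in>A2. \<forall>x\<in>X. Q x y z})) \<ge> q * card A2 * card A3"
      using cX card_pairs[OF f(2) f(3), of "\<lambda>y z. \<forall>x\<in>X. Q x y z"] \<open>card T = card A2 * card A3\<close>
      by (simp add: mult.assoc)
    note bc = bip_complete[where R="\<lambda>y z. \<forall>x\<in>X. Q x y z", OF q k(2) f(2) f(3) s2 s3 this]
    then obtain Y where Y: "Y \<subseteq> A2" "card Y = k2" and
      ZZ: "\<exists>Z\<subseteq>A3. card Z = k3 \<and> (\<forall>y\<in>Y. \<forall>z\<in>Z. \<forall>x\<in>X. Q x y z)" by blast
    from ZZ obtain Z where Z: "Z \<subseteq> A3" "card Z = k3" "\<forall>y\<in>Y. \<forall>z\<in>Z. \<forall>x\<in>X. Q x y z" by blast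
    have "\<forall>x\<in>X. \<forall>y\<in>Y. \<forall>z\<in>Z. Q x y z" using Z(3) by simp
    then show "\<exists>X\<subseteq>A1. \<exists>Y\<subseteq>A2. \<exists>Z\<subseteq>A3. card X = k1 \<and> card Y = k2 \<and> card Z = k3 \<and> (\<forall>x\<in>X. \<forall>y\<in>Y. \<forall>z\<in>Z. Q x y z)"
      using X Y Z(1,2) by (intro exI[of _ X] conjI exI[of _ Y] exI[of _ Z]) simp_all
  qed
qed


definition binv :: "real \<Rightarrow> real \<Rightarrow> real \<Rightarrow> real \<Rightarrow> real \<Rightarrow> real \<Rightarrow> bool" where
  "binv a b c r1 r2 r3 \<longleftrightarrow>
    (\<forall>x\<in>{r1,r2,r3}. a*(r1+r2+r3) \<le> (a+b+c)*(x+2*c) \<and> (a+b+c)*x \<le> c*(r1+r2+r3) + (a+b+c)*(2*c))"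

lemma binv_sorted_step:
  assumes abc: "0 < a" "a \<le> b" "b \<le> c" and r: "0 \<le> r1" "r1 \<le> r2" "r2 \<le> r3"
    and B: "binv a b c r1 r2 r3"
  shows "binv a b c (r1-a) (r2-b) (r3-c)"
proof -
  from B have h1: "a*(r1+r2+r3) \<le> (a+b+c)*(r1+2*c)" "(a+b+c)*r1 \<le> c*(r1+r2+r3) + (a+b+c)*(2*c)"
    and h2: "a*(r1+r2+r3) \<le> (a+b+c)*(r2+2*c)" "(a+b+c)*r2 \<le> c*(r1+r2+r3) + (a+b+c)*(2*c)"
    and h3: "a*(r1+r2+r3) \<le> (a+b+c)*(r3+2*c)" "(a+b+c)*r3 \<le> c*(r1+r2+r3) + (a+b+c)*(2*c)"
    unfolding binv_def by auto
  have m: "u*x \<le> u*y" if "0 \<le> u" "x \<le> y" for u x y :: real using that by (simp add: mult_left_mono)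
  have n: "u*x \<le> v*x" if "u \<le> v" "0 \<le> x" for u v x :: real using that by (simp add: mult_right_mono)
  have p1: "a*r1 \<le> a*r2" "a*r2 \<le> a*r3" "b*r1 \<le> b*r2" "b*r2 \<le> b*r3" "c*r1 \<le> c*r2" "c*r2 \<le> c*r3"
    using abc r by (auto intro!: m)
  have p2: "a*r1 \<le> b*r1" "b*r1 \<le> c*r1" "a*r2 \<le> b*r2" "b*r2 \<le> c*r2" "a*r3 \<le> b*r3" "b*r3 \<le> c*r3"
    using abc r by (auto intro!: n)
  have p3: "a*a \<le> a*b" "a*b \<le> a*c" "a*b \<le> b*b" "b*b \<le> b*c" "b*c \<le> c*c" "a*c \<le> b*c" "0 \<le> a*r1"
    using abc r by (auto intro!: m n)
  have p4: "0 \<le> a*c" "0 \<le> b*c" "0 \<le> c*c" "0 \<le> a*a" "0 \<le> a*b" "0 \<le> b*b"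
    using abc by auto
  have l1: "a*(r1-a+r2-b+r3-c) \<le> (a+b+c)*(r1-a+2*c)" using h1(1) by (simp add: algebra_simps)
  have u1: "(a+b+c)*(r1-a) \<le> c*(r1-a+r2-b+r3-c) + (a+b+c)*(2*c)"
  proof -
    have "(a+b+c)*r1 \<le> c*(r1+r2+r3)" using p1 p2 by (simp add: algebra_simps)
    moreover have "c*(a+b+c) \<le> (a+b+c)*(2*c) + (a+b+c)*a" using p4 by (simp add: algebra_simps)
    ultimately show ?thesis by (simp add: algebra_simps)
  qed
  have l2: "a*(r1-a+r2-b+r3-c) \<le> (a+b+c)*(r2-b+2*c)"
  proof -
    have "(a+b+c)*r1 \<le> (a+b+c)*r2" using p1 by (simp add: algebra_simps)
    moreover have "a*(r1+r2+r3) \<le> b*(r1+r2+r3)" using p2 by (simp add: algebra_simps)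
    moreover have "0 \<le> (a+b+c)*(c+a-b)" using abc by simp
    ultimately show ?thesis using h3(2) by (simp add: algebra_simps)
  qed
  have u2: "(a+b+c)*(r2-b) \<le> c*(r1-a+r2-b+r3-c) + (a+b+c)*(2*c)"
  proof -
    have "(a+b+c)*r2 \<le> (a+b+c)*r3" using p1 by (simp add: algebra_simps)
    moreover have "b*(r1+r2+r3) \<le> c*(r1+r2+r3)" using p2 by (simp add: algebra_simps)
    moreover have "0 \<le> (a+b+c)*(c+b-c)" using abc by simp
    ultimately show ?thesis using h1(1) by (simp add: algebra_simps)
  qed
  have l3: "a*(r1-a+r2-b+r3-c) \<le> (a+b+c)*(r3-c+2*c)"
  proof -
    have "a*(r1+r2+r3) \<le> (a+b+c)*r3" using p1 p2 by (simp add: algebra_simps)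
    moreover have "0 \<le> (a+b+c)*(a+c)" using abc by simp
    ultimately show ?thesis by (simp add: algebra_simps)
  qed
  have u3: "(a+b+c)*(r3-c) \<le> c*(r1-a+r2-b+r3-c) + (a+b+c)*(2*c)" using h3(2) by (simp add: algebra_simps)
  show ?thesis unfolding binv_def using l1 u1 l2 u2 l3 u3 by (simp add: algebra_simps)
qed

lemma binv_perm:
  "binv a b c r1 r2 r3 \<Longrightarrow> binv a b c r2 r1 r3"
  "binv a b c r1 r2 r3 \<Longrightarrow> binv a b c r1 r3 r2"
  "binv a b c r1 r2 r3 \<Longrightarrow> binv a b c r3 r2 r1"
  unfolding binv_def by (auto simp: algebra_simps)

definition perms :: "nat \<Rightarrow> nat \<Rightarrow> nat \<Rightarrow> (nat \<times> nat \<times> nat) set" where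
  "perms a b c = {(a,b,c),(a,c,b),(b,a,c),(b,c,a),(c,a,b),(c,b,a)}"

lemma step_exists:
  fixes a b c :: nat and r1 r2 r3 :: real
  assumes abc: "0 < a" "a \<le> b" "b \<le> c" and r: "0 \<le> r1" "0 \<le> r2" "0 \<le> r3"
    and B: "binv a b c r1 r2 r3"
  shows "\<exists>q1 q2 q3. (q1,q2,q3) \<in> perms a b c \<and> binv a b c (r1 - q1) (r2 - q2) (r3 - q3)"
proof -
  have abc': "0 < real a" "real a \<le> real b" "real b \<le> real c" using abc by auto
  note st = binv_sorted_step[OF abc']
  note P = binv_perm
  consider "r1 \<le> r2" "r2 \<le> r3" | "r1 \<le> r3" "r3 \<le> r2" | "r2 \<le> r1" "r1 \<le> r3"
    | "r2 \<le> r3" "r3 \<le> r1" | "r3 \<le> r1" "r1 \<le> r2" | "r3 \<le> r2" "r2 \<le> r1" by linarith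
  then show ?thesis
  proof cases
    case 1
    have "binv a b c (r1-a) (r2-b) (r3-c)" using st[OF r(1) 1 B] .
    then show ?thesis by (intro exI[of _ a] exI[of _ b] exI[of _ c] conjI) (auto simp: perms_def)
  next
    case 2
    have "binv a b c (r1-a) (r3-b) (r2-c)" using st[OF r(1) 2 P(2)[OF B]] .
    then have "binv a b c (r1-a) (r2-c) (r3-b)" by (rule P(2))
    then show ?thesis by (intro exI[of _ a] exI[of _ c] exI[of _ b] conjI) (auto simp: perms_def)
  next
    case 3
    have "binv a b c (r2-a) (r1-b) (r3-c)" using st[OF r(2) 3 P(1)[OF B]] .
    then have "binv a b c (r1-b) (r2-a) (r3-c)" by (rule P(1))
    then show ?thesis by (intro exI[of _ b] exI[of _ a] exI[of _ c] conjI) (auto simp: perms_def)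
  next
    case 4
    have h: "binv a b c (r2-a) (r3-b) (r1-c)" using st[OF r(2) 4 P(2)[OF P(1)[OF B]]] .
    have "binv a b c (r1-c) (r2-a) (r3-b)" using P(2)[OF P(3)[OF h]] .
    then show ?thesis by (intro exI[of _ c] exI[of _ a] exI[of _ b] conjI) (auto simp: perms_def)
  next
    case 5
    have h: "binv a b c (r3-a) (r1-b) (r2-c)" using st[OF r(3) 5 P(1)[OF P(2)[OF B]]] .
    have "binv a b c (r1-b) (r2-c) (r3-a)" using P(2)[OF P(1)[OF h]] .
    then show ?thesis by (intro exI[of _ b] exI[of _ c] exI[of _ a] conjI) (auto simp: perms_def)
  next
    case 6
    have "binv a b c (r3-a) (r2-b) (r1-c)" using st[OF r(3) 6 P(3)[OF B]] .
    then have "binv a b c (r1-c) (r2-b) (r3-a)" by (rule P(3))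
    then show ?thesis by (intro exI[of _ c] exI[of _ b] exI[of _ a] conjI) (auto simp: perms_def)
  qed
qed


lemma edge_perm: "{x,y,z} = {y,x,z}" "{x,y,z} = {x,z,y}" "{x,y,z} = {z,y,x}" "{x,y,z} = {y,z,x}" "{x,y,z} = {z,x,y}"
  by auto

lemma mk_copy:
  assumes sub: "X1 \<subseteq> V" "X2 \<subseteq> V" "X3 \<subseteq> V"
    and dis: "X1 \<inter> X2 = {}" "X2 \<inter> X3 = {}" "X1 \<inter> X3 = {}"
    and pm: "(card X1, card X2, card X3) \<in> perms a b c"
    and ed: "\<forall>x\<in>X1. \<forall>y\<in>X2. \<forall>z\<in>X3. {x,y,z} \<in> E"
  shows "\<exists>K. K_copy a b c V E K \<and> copy_verts K = X1 \<union> X2 \<union> X3"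
proof -
  have E6: "\<forall>x\<in>X1. \<forall>y\<in>X2. \<forall>z\<in>X3. {x,y,z}\<in>E \<and> {x,z,y}\<in>E \<and> {y,x,z}\<in>E \<and> {y,z,x}\<in>E \<and> {z,x,y}\<in>E \<and> {z,y,x}\<in>E"
    using ed by (simp add: insert_commute)
  from pm consider "card X1 = a" "card X2 = b" "card X3 = c" | "card X1 = a" "card X2 = c" "card X3 = b"
    | "card X1 = b" "card X2 = a" "card X3 = c" | "card X1 = b" "card X2 = c" "card X3 = a"
    | "card X1 = c" "card X2 = a" "card X3 = b" | "card X1 = c" "card X2 = b" "card X3 = a"
    unfolding perms_def by auto
  then show ?thesis
  proof cases
    case 1 show ?thesis
      by (rule exI[of _ "(X1,X2,X3)"]) (use sub dis E6 1 in \<open>auto simp: K_copy_def copy_verts_def\<close>)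
  next
    case 2 show ?thesis
      by (rule exI[of _ "(X1,X3,X2)"]) (use sub dis E6 2 in \<open>auto simp: K_copy_def copy_verts_def\<close>)
  next
    case 3 show ?thesis
      by (rule exI[of _ "(X2,X1,X3)"]) (use sub dis E6 3 in \<open>auto simp: K_copy_def copy_verts_def\<close>)
  next
    case 4 show ?thesis
      by (rule exI[of _ "(X3,X1,X2)"]) (use sub dis E6 4 in \<open>auto simp: K_copy_def copy_verts_def\<close>)
  next
    case 5 show ?thesis
      by (rule exI[of _ "(X2,X3,X1)"]) (use sub dis E6 5 in \<open>auto simp: K_copy_def copy_verts_def\<close>)
  next
    case 6 show ?thesis
      by (rule exI[of _ "(X3,X2,X1)"]) (use sub dis E6 6 in \<open>auto simp: K_copy_def copy_verts_def\<close>)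
  qed
qed

lemma greedy:
  fixes a b c :: nat and \<theta> :: real
  assumes abc: "0 < a" "a \<le> b" "b \<le> c"
    and U: "U1 \<subseteq> V" "U2 \<subseteq> V" "U3 \<subseteq> V" "finite U1" "finite U2" "finite U3"
    and dis: "U1 \<inter> U2 = {}" "U2 \<inter> U3 = {}" "U1 \<inter> U3 = {}"
    and F: "\<And>A1 A2 A3 q1 q2 q3. A1 \<subseteq> U1 \<Longrightarrow> A2 \<subseteq> U2 \<Longrightarrow> A3 \<subseteq> U3 \<Longrightarrow>
       real (card A1) \<ge> \<theta> \<Longrightarrow> real (card A2) \<ge> \<theta> \<Longrightarrow> real (card A3) \<ge> \<theta> \<Longrightarrow>
       (q1,q2,q3) \<in> perms a b c \<Longrightarrow>
       \<exists>X1 X2 X3. X1 \<subseteq> A1 \<and> X2 \<subseteq> A2 \<and> X3 \<subseteq> A3 \<and> card X1 = q1 \<and> card X2 = q2 \<and> card X3 = q3 \<and>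
         (\<forall>x\<in>X1. \<forall>y\<in>X2. \<forall>z\<in>X3. {x,y,z} \<in> E)"
  shows "A1 \<subseteq> U1 \<Longrightarrow> A2 \<subseteq> U2 \<Longrightarrow> A3 \<subseteq> U3 \<Longrightarrow> binv a b c (card A1) (card A2) (card A3) \<Longrightarrow>
    \<exists>T. K_tiling a b c V E T \<and> covered T \<subseteq> A1 \<union> A2 \<union> A3 \<and>
      real (card (covered T)) \<ge> real (card A1 + card A2 + card A3) - (a+b+c)*(\<theta>+2*c)/a"
proof (induction "card A1 + card A2 + card A3" arbitrary: A1 A2 A3 rule: less_induct)
  case less
  have fA: "finite A1" "finite A2" "finite A3" using less.prems U finite_subset by metis+
  have apos: "real a > 0" using abc by simp
  define S where "S = real (card A1 + card A2 + card A3)"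
  show ?case
  proof (cases "real (card A1) < \<theta> \<or> real (card A2) < \<theta> \<or> real (card A3) < \<theta>")
    case True
    then obtain x where x: "x \<in> {real (card A1), real (card A2), real (card A3)}" "x < \<theta>" by auto
    have "a * S \<le> (a+b+c)*(x + 2*c)" using less.prems(4) x(1) unfolding binv_def S_def by auto
    also have "\<dots> \<le> (a+b+c)*(\<theta> + 2*c)" using x(2) abc by (intro mult_left_mono) auto
    finally have "S \<le> (a+b+c)*(\<theta>+2*c)/a" using apos by (simp add: field_simps)
    then show ?thesis
      by (intro exI[of _ "{}"]) (auto simp: K_tiling_def covered_def S_def)
  next
    case False
    then have big: "real (card A1) \<ge> \<theta>" "real (card A2) \<ge> \<theta>" "real (card A3) \<ge> \<theta>" by auto
    obtain q1 q2 q3 where q: "(q1,q2,q3) \<in> perms a b c"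
      and B': "binv a b c (real (card A1) - q1) (real (card A2) - q2) (real (card A3) - q3)"
      using step_exists[OF abc _ _ _ less.prems(4)] by auto
    obtain X1 X2 X3 where X: "X1 \<subseteq> A1" "X2 \<subseteq> A2" "X3 \<subseteq> A3" "card X1 = q1" "card X2 = q2" "card X3 = q3"
      and ed: "\<forall>x\<in>X1. \<forall>y\<in>X2. \<forall>z\<in>X3. {x,y,z} \<in> E"
      using F[OF less.prems(1-3) big q] by blast
    define A1' where "A1' = A1 - X1"
    define A2' where "A2' = A2 - X2"
    define A3' where "A3' = A3 - X3"
    have fX: "finite X1" "finite X2" "finite X3" using X fA finite_subset by metis+
    have cA: "card A1' = card A1 - q1" "card A2' = card A2 - q2" "card A3' = card A3 - q3"
      unfolding A1'_def A2'_def A3'_def using X fX by (auto simp: card_Diff_subset)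
    have qle: "q1 \<le> card A1" "q2 \<le> card A2" "q3 \<le> card A3" using X fA by (metis card_mono)+
    have qsum: "q1 + q2 + q3 = a + b + c" using q unfolding perms_def by auto
    have B'': "binv a b c (card A1') (card A2') (card A3')" using B' cA qle by (simp add: of_nat_diff)
    have lt: "card A1' + card A2' + card A3' < card A1 + card A2 + card A3"
      using cA qle qsum abc by linarith
    obtain T' where T': "K_tiling a b c V E T'" "covered T' \<subseteq> A1' \<union> A2' \<union> A3'"
      and cT': "real (card (covered T')) \<ge> real (card A1' + card A2' + card A3') - (a+b+c)*(\<theta>+2*c)/a"
    proof -
      have sub': "A1' \<subseteq> U1" "A2' \<subseteq> U2" "A3' \<subseteq> U3" using less.prems(1-3) unfolding A1'_def A2'_def A3'_def by auto
      show ?thesis using less.hyps[OF lt sub' B''] that by blast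
    qed
    have XV: "X1 \<subseteq> V" "X2 \<subseteq> V" "X3 \<subseteq> V" using X less.prems U by blast+
    have Xd: "X1 \<inter> X2 = {}" "X2 \<inter> X3 = {}" "X1 \<inter> X3 = {}" using X less.prems dis by blast+
    obtain K where K: "K_copy a b c V E K" "copy_verts K = X1 \<union> X2 \<union> X3"
    proof -
      have "(card X1, card X2, card X3) \<in> perms a b c" using q X by simp
      from mk_copy[OF XV Xd this ed] show ?thesis using that by blast
    qed
    have disK: "(X1 \<union> X2 \<union> X3) \<inter> covered T' = {}"
      using T'(2) X less.prems dis unfolding A1'_def A2'_def A3'_def by blast
    have X1ne: "X1 \<noteq> {} \<or> X2 \<noteq> {} \<or> X3 \<noteq> {}"
    proof -
      have "q1 + q2 + q3 > 0" using qsum abc by simp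
      then show ?thesis using X by auto
    qed
    have KnT: "K \<notin> T'"
    proof
      assume "K \<in> T'"
      then have "copy_verts K \<subseteq> covered T'" unfolding covered_def by auto
      then show False using disK X1ne K(2) by blast
    qed
    define T where "T = insert K T'"
    have tiling: "K_tiling a b c V E T"
      unfolding T_def K_tiling_def
    proof (intro conjI ballI impI)
      fix K1 assume "K1 \<in> insert K T'"
      then show "K_copy a b c V E K1" using K T' unfolding K_tiling_def by auto
    next
      fix K1 K2 assume k1: "K1 \<in> insert K T'" and k2: "K2 \<in> insert K T'" and ne: "K1 \<noteq> K2"
      have cv: "K' \<in> T' \<Longrightarrow> copy_verts K' \<inter> copy_verts K = {}" for K'
        using disK K(2) unfolding covered_def by blast
      have T'd: "\<forall>K\<in>T'. \<forall>K'\<in>T'. K \<noteq> K' \<longrightarrow> copy_verts K \<inter> copy_verts K' = {}"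
        using T'(1) unfolding K_tiling_def by blast
      show "copy_verts K1 \<inter> copy_verts K2 = {}"
      proof (cases "K1 = K")
        case True
        then have "K2 \<in> T'" using k2 ne by auto
        then show ?thesis using cv True by (simp add: Int_commute)
      next
        case False
        then have k1': "K1 \<in> T'" using k1 by auto
        show ?thesis
        proof (cases "K2 = K")
          case True
          then show ?thesis using cv k1' by simp
        next
          case False
          then have "K2 \<in> T'" using k2 by auto
          then show ?thesis using T'd k1' ne by blast
        qed
      qed
    qed
    have covT: "covered T = (X1 \<union> X2 \<union> X3) \<union> covered T'" unfolding T_def covered_def using K(2) by auto
    have fcT': "finite (covered T')" using T'(2) fA finite_subset unfolding A1'_def A2'_def A3'_def by blast
    have cardX: "card (X1 \<union> X2 \<union> X3) = q1 + q2 + q3"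
      using fX Xd X by (simp add: card_Un_disjoint Int_Un_distrib2)
    have "card (covered T) = card (X1 \<union> X2 \<union> X3) + card (covered T')"
      unfolding covT using fX fcT' disK by (simp add: card_Un_disjoint)
    then have "real (card (covered T)) = (a+b+c) + real (card (covered T'))" using cardX qsum by simp
    moreover have "real (card A1' + card A2' + card A3') = S - (a+b+c)"
      unfolding S_def using cA qle qsum by (simp add: of_nat_diff)
    ultimately have "real (card (covered T)) \<ge> S - (a+b+c)*(\<theta>+2*c)/a" using cT' by linarith
    moreover have "covered T \<subseteq> A1 \<union> A2 \<union> A3" using covT T'(2) X unfolding A1'_def A2'_def A3'_def by blast
    ultimately show ?thesis using tiling unfolding S_def by blast
  qed
qed


definition tc :: "'a set set \<Rightarrow> 'a set \<Rightarrow> 'a set \<Rightarrow> 'a set \<Rightarrow> nat" where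
  "tc E X Y Z = card {(x,y,z). x\<in>X \<and> y\<in>Y \<and> z\<in>Z \<and> {x,y,z} \<in> E}"

lemma tc_finite: "finite X \<Longrightarrow> finite Y \<Longrightarrow> finite Z \<Longrightarrow> finite {(x,y,z). x\<in>X \<and> y\<in>Y \<and> z\<in>Z \<and> {x,y,z} \<in> E}"
  by (rule finite_subset[of _ "X \<times> Y \<times> Z"]) auto

lemma edges_eq_tc:
  assumes d: "X \<inter> Y = {}" "Y \<inter> Z = {}" "X \<inter> Z = {}" and f: "finite X" "finite Y" "finite Z"
  shows "card {e\<in>E. \<exists>x\<in>X. \<exists>y\<in>Y. \<exists>z\<in>Z. e = {x, y, z}} = tc E X Y Z"
proof -
  let ?T = "{(x,y,z). x\<in>X \<and> y\<in>Y \<and> z\<in>Z \<and> {x,y,z} \<in> E}"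
  let ?f = "\<lambda>(x,y,z). {x,y,z}"
  have inj: "inj_on ?f ?T"
  proof (rule inj_onI, clarsimp)
    fix x y z x' y' z'
    assume a: "x \<in> X" "y \<in> Y" "z \<in> Z" "x' \<in> X" "y' \<in> Y" "z' \<in> Z" and e: "{x, y, z} = {x', y', z'}"
    have "x \<in> {x', y', z'}" using e by blast
    then have 1: "x = x'" using a d by blast
    have "y \<in> {x', y', z'}" using e by blast
    then have 2: "y = y'" using a d by blast
    have "z \<in> {x', y', z'}" using e by blast
    then have 3: "z = z'" using a d by blast
    show "x = x' \<and> y = y' \<and> z = z'" using 1 2 3 by simp
  qed
  have img: "?f ` ?T = {e\<in>E. \<exists>x\<in>X. \<exists>y\<in>Y. \<exists>z\<in>Z. e = {x, y, z}}" by auto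
  show ?thesis unfolding tc_def using card_image[OF inj] img by simp
qed

lemma tc_zero: "finite X \<Longrightarrow> finite Y \<Longrightarrow> finite Z \<Longrightarrow> real (card X) * real (card Y) * real (card Z) = 0 \<Longrightarrow> tc E X Y Z = 0"
  unfolding tc_def by (auto simp: tc_finite)

lemma tc_density:
  assumes d: "X \<inter> Y = {}" "Y \<inter> Z = {}" "X \<inter> Z = {}" and f: "finite X" "finite Y" "finite Z"
  shows "real (tc E X Y Z) = density E X Y Z * (real (card X) * real (card Y) * real (card Z))"
proof (cases "real (card X) * real (card Y) * real (card Z) = 0")
  case True then show ?thesis using tc_zero[OF f True] by simp
next
  case False then show ?thesis unfolding density_def edges_eq_tc[OF d f] by simp
qed

lemma reg_tc:
  assumes r: "eps_d_regular E \<epsilon> d' P1 P2 P3"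
    and d: "P1 \<inter> P2 = {}" "P2 \<inter> P3 = {}" "P1 \<inter> P3 = {}" and f: "finite P1" "finite P2" "finite P3"
    and A: "A1 \<subseteq> P1" "A2 \<subseteq> P2" "A3 \<subseteq> P3"
    and c: "real (card A1) \<ge> \<epsilon> * card P1" "real (card A2) \<ge> \<epsilon> * card P2" "real (card A3) \<ge> \<epsilon> * card P3"
  shows "(d' - \<epsilon>) * (real (card A1) * real (card A2) * real (card A3)) \<le> real (tc E A1 A2 A3)"
    "real (tc E A1 A2 A3) \<le> (d' + \<epsilon>) * (real (card A1) * real (card A2) * real (card A3))"
proof -
  have fA: "finite A1" "finite A2" "finite A3" using A f finite_subset by metis+
  have dA: "A1 \<inter> A2 = {}" "A2 \<inter> A3 = {}" "A1 \<inter> A3 = {}" using A d by blast+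
  have ab: "\<bar>density E A1 A2 A3 - d'\<bar> \<le> \<epsilon>" using r A c unfolding eps_d_regular_def by blast
  have pr: "real (card A1) * real (card A2) * real (card A3) \<ge> 0" by simp
  have t: "real (tc E A1 A2 A3) = density E A1 A2 A3 * (real (card A1) * real (card A2) * real (card A3))"
    by (rule tc_density[OF dA fA])
  have "d' - \<epsilon> \<le> density E A1 A2 A3" "density E A1 A2 A3 \<le> d' + \<epsilon>" using ab by linarith+
  then show "(d' - \<epsilon>) * (real (card A1) * real (card A2) * real (card A3)) \<le> real (tc E A1 A2 A3)"
    "real (tc E A1 A2 A3) \<le> (d' + \<epsilon>) * (real (card A1) * real (card A2) * real (card A3))"
    unfolding t using pr by (simp_all add: mult_right_mono)
qed

lemma reg_lower:
  assumes reg: "eps_regular E \<epsilon> P1 P2 P3"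
    and d: "P1 \<inter> P2 = {}" "P2 \<inter> P3 = {}" "P1 \<inter> P3 = {}" and f: "finite P1" "finite P2" "finite P3"
    and m: "card P1 = m" "card P2 = m" "card P3 = m" "m > 0" and e1: "\<epsilon> \<le> 1"
    and den: "density E P1 P2 P3 \<ge> d"
    and A: "A1 \<subseteq> P1" "A2 \<subseteq> P2" "A3 \<subseteq> P3"
    and c: "real (card A1) \<ge> \<epsilon> * m" "real (card A2) \<ge> \<epsilon> * m" "real (card A3) \<ge> \<epsilon> * m"
  shows "(d - 2*\<epsilon>) * (real (card A1) * real (card A2) * real (card A3)) \<le> real (tc E A1 A2 A3)"
proof -
  obtain d' where r: "eps_d_regular E \<epsilon> d' P1 P2 P3" using reg unfolding eps_regular_def by blast
  have cP: "real (card P1) \<ge> \<epsilon> * card P1" "real (card P2) \<ge> \<epsilon> * card P2" "real (card P3) \<ge> \<epsilon> * card P3"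
    using mult_right_mono[OF e1, of "real (card P1)"] mult_right_mono[OF e1, of "real (card P2)"]
      mult_right_mono[OF e1, of "real (card P3)"] by simp_all
  have up: "real (tc E P1 P2 P3) \<le> (d' + \<epsilon>) * (real m * real m * real m)"
    using reg_tc(2)[OF r d f subset_refl subset_refl subset_refl cP] m by simp
  have eqP: "real (tc E P1 P2 P3) = density E P1 P2 P3 * (real m * real m * real m)"
    using tc_density[OF d f] m by simp
  have mpos: "real m * real m * real m > 0" using m by simp
  have "density E P1 P2 P3 * (real m * real m * real m) \<le> (d' + \<epsilon>) * (real m * real m * real m)"
    using up eqP by simp
  then have "density E P1 P2 P3 \<le> d' + \<epsilon>" using mpos mult_le_cancel_right_pos by blast
  then have dd: "d - 2*\<epsilon> \<le> d' - \<epsilon>" using den by simp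
  have cA: "real (card A1) \<ge> \<epsilon> * card P1" "real (card A2) \<ge> \<epsilon> * card P2" "real (card A3) \<ge> \<epsilon> * card P3"
    using c m by simp_all
  have lo: "(d' - \<epsilon>) * (real (card A1) * real (card A2) * real (card A3)) \<le> real (tc E A1 A2 A3)"
    by (rule reg_tc(1)[OF r d f A cA])
  have "(d - 2*\<epsilon>) * (real (card A1) * real (card A2) * real (card A3)) \<le> (d' - \<epsilon>) * (real (card A1) * real (card A2) * real (card A3))"
    using dd by (intro mult_right_mono) auto
  then show ?thesis using lo by linarith
qed

lemma tc_Un1: "finite X \<Longrightarrow> finite X' \<Longrightarrow> finite Y \<Longrightarrow> finite Z \<Longrightarrow> X \<inter> X' = {} \<Longrightarrow>
  tc E (X \<union> X') Y Z = tc E X Y Z + tc E X' Y Z"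
proof -
  assume f: "finite X" "finite X'" "finite Y" "finite Z" and d: "X \<inter> X' = {}"
  have eq: "{(x,y,z). x\<in>X \<union> X' \<and> y\<in>Y \<and> z\<in>Z \<and> {x,y,z} \<in> E} =
    {(x,y,z). x\<in>X \<and> y\<in>Y \<and> z\<in>Z \<and> {x,y,z} \<in> E} \<union> {(x,y,z). x\<in>X' \<and> y\<in>Y \<and> z\<in>Z \<and> {x,y,z} \<in> E}" by auto
  show ?thesis unfolding tc_def eq
    by (subst card_Un_disjoint) (use f d tc_finite in auto)
qed

lemma tc_Un2: "finite X \<Longrightarrow> finite Y \<Longrightarrow> finite Y' \<Longrightarrow> finite Z \<Longrightarrow> Y \<inter> Y' = {} \<Longrightarrow>
  tc E X (Y \<union> Y') Z = tc E X Y Z + tc E X Y' Z"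
proof -
  assume f: "finite X" "finite Y" "finite Y'" "finite Z" and d: "Y \<inter> Y' = {}"
  have eq: "{(x,y,z). x\<in>X \<and> y\<in>Y \<union> Y' \<and> z\<in>Z \<and> {x,y,z} \<in> E} =
    {(x,y,z). x\<in>X \<and> y\<in>Y \<and> z\<in>Z \<and> {x,y,z} \<in> E} \<union> {(x,y,z). x\<in>X \<and> y\<in>Y' \<and> z\<in>Z \<and> {x,y,z} \<in> E}" by auto
  show ?thesis unfolding tc_def eq
    by (subst card_Un_disjoint) (use f d tc_finite in auto)
qed

lemma tc_Un3: "finite X \<Longrightarrow> finite Y \<Longrightarrow> finite Z \<Longrightarrow> finite Z' \<Longrightarrow> Z \<inter> Z' = {} \<Longrightarrow>
  tc E X Y (Z \<union> Z') = tc E X Y Z + tc E X Y Z'"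
proof -
  assume f: "finite X" "finite Y" "finite Z" "finite Z'" and d: "Z \<inter> Z' = {}"
  have eq: "{(x,y,z). x\<in>X \<and> y\<in>Y \<and> z\<in>Z \<union> Z' \<and> {x,y,z} \<in> E} =
    {(x,y,z). x\<in>X \<and> y\<in>Y \<and> z\<in>Z \<and> {x,y,z} \<in> E} \<union> {(x,y,z). x\<in>X \<and> y\<in>Y \<and> z\<in>Z' \<and> {x,y,z} \<in> E}" by auto
  show ?thesis unfolding tc_def eq
    by (subst card_Un_disjoint) (use f d tc_finite in auto)
qed

lemma exists_k: fixes x :: real assumes "x > 0" shows "\<exists>k::nat. x \<le> real k \<and> real k < x + 1"
proof -
  have "real (nat \<lceil>x\<rceil>) = of_int \<lceil>x\<rceil>" using assms by simp
  then show ?thesis using ceiling_correct[of x] by (intro exI[of _ "nat \<lceil>x\<rceil>"]) linarith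
qed

lemma reg_positive:
  assumes reg: "eps_regular E \<epsilon> P1 P2 P3"
    and d: "P1 \<inter> P2 = {}" "P2 \<inter> P3 = {}" "P1 \<inter> P3 = {}" and f: "finite P1" "finite P2" "finite P3"
    and m: "card P1 = m" "card P2 = m" "card P3 = m" and e: "\<epsilon> > 0" and me: "real m - 2*\<epsilon>*m \<ge> 1"
    and den: "density E P1 P2 P3 \<ge> 2*\<epsilon>"
    and A: "A1 \<subseteq> P1" "A2 \<subseteq> P2" "A3 \<subseteq> P3"
    and c: "real (card A1) \<ge> \<epsilon> * m" "real (card A2) \<ge> \<epsilon> * m" "real (card A3) \<ge> \<epsilon> * m"
  shows "tc E A1 A2 A3 > 0"
proof (rule ccontr)
  assume "\<not> tc E A1 A2 A3 > 0"
  then have z: "tc E A1 A2 A3 = 0" by simp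
  obtain d' where r: "eps_d_regular E \<epsilon> d' P1 P2 P3" using reg unfolding eps_regular_def by blast
  have mpos: "real m > 0" using me e by (smt (verit) mult_nonneg_nonneg of_nat_0_le_iff)
  have em: "\<epsilon> * m > 0" using e mpos by simp
  obtain k :: nat where k: "\<epsilon>*m \<le> real k" "real k < \<epsilon>*m + 1" using exists_k[OF em] by blast
  have kA: "k \<le> card A1" "k \<le> card A2" "k \<le> card A3" using k c by linarith+
  obtain B1 where B1: "B1 \<subseteq> A1" "card B1 = k" using kA(1) obtain_subset_with_card_n by metis
  obtain B2 where B2: "B2 \<subseteq> A2" "card B2 = k" using kA(2) obtain_subset_with_card_n by metis
  obtain B3 where B3: "B3 \<subseteq> A3" "card B3 = k" using kA(3) obtain_subset_with_card_n by metis
  define C1 where "C1 = P1 - B1"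
  define C2 where "C2 = P2 - B2"
  define C3 where "C3 = P3 - B3"
  have BP: "B1 \<subseteq> P1" "B2 \<subseteq> P2" "B3 \<subseteq> P3" using A B1 B2 B3 by blast+
  have fB: "finite B1" "finite B2" "finite B3" using BP f finite_subset by metis+
  have fC: "finite C1" "finite C2" "finite C3" unfolding C1_def C2_def C3_def using f by simp_all
  have cC: "card C1 = m - k" "card C2 = m - k" "card C3 = m - k"
    unfolding C1_def C2_def C3_def using BP fB m B1 B2 B3 by (simp_all add: card_Diff_subset)
  have km: "k \<le> m" using kA A f m by (metis card_mono order_trans)
  have cCr: "real (card C1) = real m - k" "real (card C2) = real m - k" "real (card C3) = real m - k"
    using cC km by simp_all
  have Cbig: "real m - k \<ge> \<epsilon> * m" using k me by linarith
  have kpos: "real k > 0" using k em by linarith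
  have Pu: "P1 = B1 \<union> C1" "P2 = B2 \<union> C2" "P3 = B3 \<union> C3" unfolding C1_def C2_def C3_def using BP by auto
  have BCd: "B1 \<inter> C1 = {}" "B2 \<inter> C2 = {}" "B3 \<inter> C3 = {}" unfolding C1_def C2_def C3_def by auto
  have CP: "C1 \<subseteq> P1" "C2 \<subseteq> P2" "C3 \<subseteq> P3" unfolding C1_def C2_def C3_def by auto
  have "(2*\<epsilon>-1)*m < 0" using me by (simp add: algebra_simps)
  then have "2*\<epsilon> - 1 < 0" using mpos by (simp add: mult_less_0_iff)
  then have e1: "\<epsilon> \<le> 1" by linarith
  have cP: "real (card P1) \<ge> \<epsilon> * card P1" "real (card P2) \<ge> \<epsilon> * card P2" "real (card P3) \<ge> \<epsilon> * card P3"
    using mult_right_mono[OF e1, of "real (card P1)"] mult_right_mono[OF e1, of "real (card P2)"]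
      mult_right_mono[OF e1, of "real (card P3)"] by simp_all
  note R = reg_tc[OF r d f]
  have cBm: "real (card B1) \<ge> \<epsilon> * card P1" "real (card B2) \<ge> \<epsilon> * card P2" "real (card B3) \<ge> \<epsilon> * card P3"
    using B1 B2 B3 k m by simp_all
  have cCm: "real (card C1) \<ge> \<epsilon> * card P1" "real (card C2) \<ge> \<epsilon> * card P2" "real (card C3) \<ge> \<epsilon> * card P3"
    using cCr Cbig m by simp_all
  have zB: "tc E B1 B2 B3 = 0"
  proof -
    have "tc E B1 B2 B3 \<le> tc E A1 A2 A3" unfolding tc_def
      using B1 B2 B3 f A by (intro card_mono tc_finite) (auto intro: finite_subset)
    then show ?thesis using z by simp
  qed
  have kk: "real k * real k * real k > 0" using kpos by simp
  have "(d' - \<epsilon>) * (real k * real k * real k) \<le> 0" using R(1)[OF BP cBm] zB B1 B2 B3 by simp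
  then have d1: "d' \<le> \<epsilon>" using kk kpos by (auto simp: mult_le_0_iff)
  have mm: "real m * real m * real m > 0" using mpos by simp
  have "2*\<epsilon> * (real m * real m * real m) \<le> real (tc E P1 P2 P3)"
    using tc_density[OF d f, of E] den m mm by (simp add: mult_right_mono)
  note tP = this
  have s1: "tc E P1 P2 P3 = tc E B1 P2 P3 + tc E C1 P2 P3" using Pu(1) tc_Un1 fB fC f BCd by metis
  have u1: "real (tc E C1 P2 P3) \<le> (d'+\<epsilon>) * (real (card C1) * m * m)" using R(2)[OF CP(1) subset_refl subset_refl cCm(1) cP(2,3)] m by simp
  have u1': "real (tc E B1 P2 P3) \<le> (d'+\<epsilon>) * (real (card B1) * m * m)" using R(2)[OF BP(1) subset_refl subset_refl cBm(1) cP(2,3)] m by simp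
  have pos1: "real (card C1) * m * m \<ge> 0" "real (card B1) * m * m \<ge> 0" by simp_all
  have c1: "real (card B1) + real (card C1) = m" using cCr B1 by simp
  have "real (tc E B1 P2 P3) \<ge> 2*\<epsilon> * (real (card B1) * m * m)"
  proof -
    have "real (tc E C1 P2 P3) \<le> 2*\<epsilon> * (real (card C1) * m * m)"
      using u1 d1 pos1 by (smt (verit) mult_right_mono)
    moreover have "2*\<epsilon> * (real m * real m * real m) = 2*\<epsilon> * (real (card B1) * m * m) + 2*\<epsilon> * (real (card C1) * m * m)"
      using c1 by (simp add: algebra_simps) (metis distrib_left distrib_right mult.assoc)
    ultimately show ?thesis using tP s1 by simp
  qed
  note t1 = this
  have s2: "tc E B1 P2 P3 = tc E B1 B2 P3 + tc E B1 C2 P3" using Pu(2) tc_Un2 fB fC f BCd by metis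
  have u2: "real (tc E B1 C2 P3) \<le> (d'+\<epsilon>) * (real (card B1) * real (card C2) * m)"
    using R(2)[OF BP(1) CP(2) subset_refl cBm(1) cCm(2) cP(3)] m by simp
  have c2: "real (card B2) + real (card C2) = m" using cCr B2 by simp
  have "real (tc E B1 B2 P3) \<ge> 2*\<epsilon> * (real (card B1) * real (card B2) * m)"
  proof -
    have "real (tc E B1 C2 P3) \<le> 2*\<epsilon> * (real (card B1) * real (card C2) * m)"
      using u2 d1 by (smt (verit) mult_right_mono of_nat_0_le_iff mult_nonneg_nonneg)
    moreover have "2*\<epsilon> * (real (card B1) * m * m) = 2*\<epsilon> * (real (card B1) * real (card B2) * m) + 2*\<epsilon> * (real (card B1) * real (card C2) * m)"
      using c2 by (metis distrib_left distrib_right mult.assoc mult.commute)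
    ultimately show ?thesis using t1 s2 by simp
  qed
  note t2 = this
  have s3: "tc E B1 B2 P3 = tc E B1 B2 B3 + tc E B1 B2 C3" using Pu(3) tc_Un3 fB fC f BCd by metis
  have u3: "real (tc E B1 B2 C3) \<le> (d'+\<epsilon>) * (real (card B1) * real (card B2) * real (card C3))"
    using R(2)[OF BP(1) BP(2) CP(3) cBm(1) cBm(2) cCm(3)] by simp
  have "real (tc E B1 B2 C3) \<le> 2*\<epsilon> * (real (card B1) * real (card B2) * real (card C3))"
    using u3 d1 by (smt (verit) mult_right_mono of_nat_0_le_iff mult_nonneg_nonneg)
  moreover have "real (card C3) < m" using cCr kpos by simp
  moreover have "real (card B1) * real (card B2) > 0" using B1 B2 kpos by simp
  ultimately have "real (tc E B1 B2 C3) < 2*\<epsilon> * (real (card B1) * real (card B2) * m)"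
    using e by (smt (verit) mult_strict_left_mono)
  then show False using t2 s3 zB by simp
qed


lemma binv_init:
  fixes a b c :: real and s1 s2 s3 x1 x2 x3 :: real
  assumes abc: "1 \<le> a" "a \<le> b" "b \<le> c"
    and s: "s1 \<le> x1" "x1 < s1 + 1" "s2 \<le> x2" "x2 < s2 + 1" "s3 \<le> x3" "x3 < s3 + 1"
    and lo: "a*(x1+x2+x3) \<le> (a+b+c)*x1" "a*(x1+x2+x3) \<le> (a+b+c)*x2" "a*(x1+x2+x3) \<le> (a+b+c)*x3"
    and hi: "(a+b+c)*x1 \<le> c*(x1+x2+x3)" "(a+b+c)*x2 \<le> c*(x1+x2+x3)" "(a+b+c)*x3 \<le> c*(x1+x2+x3)"
  shows "binv a b c s1 s2 s3"
proof -
  have ap: "a \<ge> 1" "c \<ge> 1" "b \<ge> 1" using abc by auto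
  have A: "a*(s1+s2+s3) \<le> a*(x1+x2+x3)" using s ap by (intro mult_left_mono) auto
  have l: "a*(s1+s2+s3) \<le> (a+b+c)*(x+2*c)" if "x \<in> {s1,s2,s3}" for x
  proof -
    have "(a+b+c)*x1 \<le> (a+b+c)*(s1+2*c)" "(a+b+c)*x2 \<le> (a+b+c)*(s2+2*c)" "(a+b+c)*x3 \<le> (a+b+c)*(s3+2*c)"
      using s ap by (intro mult_left_mono; linarith)+
    note D = this
    from that consider "x = s1" | "x = s2" | "x = s3" by auto
    then show ?thesis
    proof cases
      case 1 show ?thesis unfolding 1 using D(1) A lo(1) by linarith
    next
      case 2 show ?thesis unfolding 2 using D(2) A lo(2) by linarith
    next
      case 3 show ?thesis unfolding 3 using D(3) A lo(3) by linarith
    qed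
  qed
  have h: "(a+b+c)*x \<le> c*(s1+s2+s3) + (a+b+c)*(2*c)" if "x \<in> {s1,s2,s3}" for x
  proof -
    have B: "c*(x1+x2+x3) \<le> c*(s1+s2+s3+3)" using s ap by (intro mult_left_mono) auto
    have "c * 3 \<le> (a+b+c)*(2*c)"
    proof -
      have "3 \<le> a + b + c" using ap by linarith
      then have "c * 3 \<le> c * (a+b+c)" using ap by (intro mult_left_mono) auto
      then have "c * 3 \<le> (a+b+c) * c" by (simp add: mult.commute)
      also have "\<dots> \<le> (a+b+c)*(2*c)" using ap by (intro mult_left_mono) auto
      finally show ?thesis .
    qed
    then have C: "c*(s1+s2+s3+3) \<le> c*(s1+s2+s3) + (a+b+c)*(2*c)" by (simp add: algebra_simps)
    have "(a+b+c)*s1 \<le> (a+b+c)*x1" "(a+b+c)*s2 \<le> (a+b+c)*x2" "(a+b+c)*s3 \<le> (a+b+c)*x3"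
      using s ap by (intro mult_left_mono; linarith)+
    note D = this
    from that consider "x = s1" | "x = s2" | "x = s3" by auto
    then show ?thesis
    proof cases
      case 1 show ?thesis unfolding 1 using D(1) B C hi(1) by linarith
    next
      case 2 show ?thesis unfolding 2 using D(2) B C hi(2) by linarith
    next
      case 3 show ?thesis unfolding 3 using D(3) B C hi(3) by linarith
    qed
  qed
  show ?thesis unfolding binv_def using l h by blast
qed

lemma F_lemma:
  fixes a b c :: nat and \<epsilon> d :: real and N m :: nat and E :: "'a set set"
  assumes abc: "1 \<le> a" "a \<le> b" "b \<le> c" and e: "\<epsilon> > 0"
    and dd: "d \<ge> 2 * real b * real c ^ 2 * \<epsilon>"
    and me: "real m - 2*\<epsilon>*m \<ge> 1"
    and EN: "\<forall>(A1::'a set) (A2::'a set) (A3::'a set) Q. finite A1 \<and> finite A2 \<and> finite A3 \<and>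
     card A1 \<ge> N \<and> card A2 \<ge> N \<and> card A3 \<ge> N \<and>
     real (card {(x,y,z). x\<in>A1 \<and> y\<in>A2 \<and> z\<in>A3 \<and> Q x y z}) \<ge> \<epsilon> * card A1 * card A2 * card A3 \<longrightarrow>
     (\<exists>X\<subseteq>A1. \<exists>Y\<subseteq>A2. \<exists>Z\<subseteq>A3. card X = c \<and> card Y = c \<and> card Z = c \<and>
        (\<forall>x\<in>X. \<forall>y\<in>Y. \<forall>z\<in>Z. Q x y z))"
    and reg: "eps_regular E \<epsilon> P1 P2 P3"
    and d: "P1 \<inter> P2 = {}" "P2 \<inter> P3 = {}" "P1 \<inter> P3 = {}" and f: "finite P1" "finite P2" "finite P3"
    and m: "card P1 = m" "card P2 = m" "card P3 = m"
    and den: "density E P1 P2 P3 \<ge> d"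
    and A: "A1 \<subseteq> P1" "A2 \<subseteq> P2" "A3 \<subseteq> P3"
    and c: "real (card A1) \<ge> \<epsilon> * m + N" "real (card A2) \<ge> \<epsilon> * m + N" "real (card A3) \<ge> \<epsilon> * m + N"
    and q: "(q1,q2,q3) \<in> perms a b c"
  shows "\<exists>X1 X2 X3. X1 \<subseteq> A1 \<and> X2 \<subseteq> A2 \<and> X3 \<subseteq> A3 \<and> card X1 = q1 \<and> card X2 = q2 \<and> card X3 = q3 \<and>
         (\<forall>x\<in>X1. \<forall>y\<in>X2. \<forall>z\<in>X3. {x,y,z} \<in> E)"
proof -
  have mpos: "real m > 0" using me e by (smt (verit) mult_nonneg_nonneg of_nat_0_le_iff)
  have "(2*\<epsilon>-1)*m < 0" using me by (simp add: algebra_simps)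
  then have "2*\<epsilon> - 1 < 0" using mpos by (simp add: mult_less_0_iff)
  then have e1: "\<epsilon> \<le> 1" by linarith
  have cm: "real (card A1) \<ge> \<epsilon> * m" "real (card A2) \<ge> \<epsilon> * m" "real (card A3) \<ge> \<epsilon> * m" using c by simp_all
  have fA: "finite A1" "finite A2" "finite A3" using A f finite_subset by metis+
  show ?thesis
  proof (cases "c = 1")
    case True
    then have abc1: "a = 1" "b = 1" using abc by auto
    have qq: "q1 = 1" "q2 = 1" "q3 = 1" using q True abc1 unfolding perms_def by auto
    have "d \<ge> 2*\<epsilon>" using dd True abc1 by simp
    then have den2: "density E P1 P2 P3 \<ge> 2*\<epsilon>" using den by simp
    have "tc E A1 A2 A3 > 0" using reg_positive[OF reg d f m e me den2 A cm] .
    then have "{(x,y,z). x\<in>A1 \<and> y\<in>A2 \<and> z\<in>A3 \<and> {x,y,z} \<in> E} \<noteq> {}" unfolding tc_def by (metis card.empty less_irrefl)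
    then obtain x y z where xyz: "x \<in> A1" "y \<in> A2" "z \<in> A3" "{x,y,z} \<in> E" by auto
    show ?thesis using xyz qq by (intro exI[of _ "{x}"] exI[of _ "{y}"] exI[of _ "{z}"]) auto
  next
    case False
    then have c2: "c \<ge> 2" using abc by simp
    have "real b * real c ^ 2 \<ge> 4"
    proof -
      have "real c ^ 2 \<ge> 2^2" using c2 by (intro power_mono) auto
      moreover have "real b \<ge> 1" using abc by simp
      ultimately show ?thesis using mult_mono[of 1 "real b" "2^2" "real c ^ 2"] by simp
    qed
    then have "(real b * real c ^ 2) * (2 * \<epsilon>) \<ge> 4 * (2*\<epsilon>)" using e by (intro mult_right_mono) auto
    then have "2 * real b * real c ^ 2 * \<epsilon> \<ge> 8 * \<epsilon>" by (simp add: algebra_simps)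
    then have dm: "d - 2*\<epsilon> \<ge> \<epsilon>" using dd e by linarith
    have lo: "(d - 2*\<epsilon>) * (real (card A1) * real (card A2) * real (card A3)) \<le> real (tc E A1 A2 A3)"
      using reg_lower[OF reg d f m _ e1 den A cm] mpos by simp
    have "\<epsilon> * (real (card A1) * real (card A2) * real (card A3)) \<le> (d - 2*\<epsilon>) * (real (card A1) * real (card A2) * real (card A3))"
      using dm by (intro mult_right_mono) auto
    then have tcb: "real (card {(x,y,z). x\<in>A1 \<and> y\<in>A2 \<and> z\<in>A3 \<and> {x,y,z} \<in> E}) \<ge> \<epsilon> * card A1 * card A2 * card A3"
      using lo unfolding tc_def by (simp add: mult.assoc)
    have em: "\<epsilon> * m > 0" using e mpos by simp
    have "real N \<le> real (card A1)" "real N \<le> real (card A2)" "real N \<le> real (card A3)"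
      using c em by linarith+
    then have NA: "card A1 \<ge> N" "card A2 \<ge> N" "card A3 \<ge> N" by simp_all
    have ex: "\<exists>X\<subseteq>A1. \<exists>Y\<subseteq>A2. \<exists>Z\<subseteq>A3. card X = c \<and> card Y = c \<and> card Z = c \<and>
        (\<forall>x\<in>X. \<forall>y\<in>Y. \<forall>z\<in>Z. {x,y,z} \<in> E)"
      apply (rule EN[rule_format, where Q="\<lambda>x y z. {x,y,z} \<in> E"])
      using fA NA tcb by auto
    then obtain X Y Z where XYZ: "X \<subseteq> A1" "Y \<subseteq> A2" "Z \<subseteq> A3" "card X = c" "card Y = c" "card Z = c"
      and ed: "\<forall>x\<in>X. \<forall>y\<in>Y. \<forall>z\<in>Z. {x,y,z} \<in> E" by blast
    have qc: "q1 \<le> c" "q2 \<le> c" "q3 \<le> c" using q abc unfolding perms_def by auto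
    obtain X1 where X1: "X1 \<subseteq> X" "card X1 = q1" using qc XYZ obtain_subset_with_card_n by metis
    obtain X2 where X2: "X2 \<subseteq> Y" "card X2 = q2" using qc XYZ obtain_subset_with_card_n by metis
    obtain X3 where X3: "X3 \<subseteq> Z" "card X3 = q3" using qc XYZ obtain_subset_with_card_n by metis
    show ?thesis using X1 X2 X3 XYZ ed by (intro exI[of _ X1] exI[of _ X2] exI[of _ X3]) blast
  qed
qed


lemma edge_tiling:
  fixes a b c :: nat and \<epsilon> d :: real and N m :: nat and E :: "'a set set" and x1 x2 x3 :: real
  assumes abc: "1 \<le> a" "a \<le> b" "b \<le> c" and e: "\<epsilon> > 0"
    and dd: "d \<ge> 2 * real b * real c ^ 2 * \<epsilon>"
    and me: "real m - 2*\<epsilon>*m \<ge> 1"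
    and EN: "\<forall>(A1::'a set) (A2::'a set) (A3::'a set) Q. finite A1 \<and> finite A2 \<and> finite A3 \<and>
     card A1 \<ge> N \<and> card A2 \<ge> N \<and> card A3 \<ge> N \<and>
     real (card {(x,y,z). x\<in>A1 \<and> y\<in>A2 \<and> z\<in>A3 \<and> Q x y z}) \<ge> \<epsilon> * card A1 * card A2 * card A3 \<longrightarrow>
     (\<exists>X\<subseteq>A1. \<exists>Y\<subseteq>A2. \<exists>Z\<subseteq>A3. card X = c \<and> card Y = c \<and> card Z = c \<and>
        (\<forall>x\<in>X. \<forall>y\<in>Y. \<forall>z\<in>Z. Q x y z))"
    and reg: "eps_regular E \<epsilon> P1 P2 P3"
    and d: "P1 \<inter> P2 = {}" "P2 \<inter> P3 = {}" "P1 \<inter> P3 = {}" and f: "finite P1" "finite P2" "finite P3"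
    and PV: "P1 \<subseteq> V" "P2 \<subseteq> V" "P3 \<subseteq> V"
    and m: "card P1 = m" "card P2 = m" "card P3 = m"
    and den: "density E P1 P2 P3 \<ge> d"
    and U: "U1 \<subseteq> P1" "U2 \<subseteq> P2" "U3 \<subseteq> P3"
    and s: "real (card U1) \<le> x1" "x1 < real (card U1) + 1" "real (card U2) \<le> x2" "x2 < real (card U2) + 1"
      "real (card U3) \<le> x3" "x3 < real (card U3) + 1"
    and lo: "a*(x1+x2+x3) \<le> (real a+b+c)*x1" "a*(x1+x2+x3) \<le> (real a+b+c)*x2" "a*(x1+x2+x3) \<le> (real a+b+c)*x3"
    and hi: "(real a+b+c)*x1 \<le> c*(x1+x2+x3)" "(real a+b+c)*x2 \<le> c*(x1+x2+x3)" "(real a+b+c)*x3 \<le> c*(x1+x2+x3)"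
  shows "\<exists>T. K_tiling a b c V E T \<and> covered T \<subseteq> U1 \<union> U2 \<union> U3 \<and>
     real (card (covered T)) \<ge> x1 + x2 + x3 - 3 - (real a+b+c)*(\<epsilon>*m + N + 2*c)/a"
proof -
  have abcr: "1 \<le> real a" "real a \<le> real b" "real b \<le> real c" using abc by auto
  have B: "binv a b c (card U1) (card U2) (card U3)" by (rule binv_init[OF abcr s lo hi])
  have fU: "finite U1" "finite U2" "finite U3" using U f finite_subset by metis+
  have UV: "U1 \<subseteq> V" "U2 \<subseteq> V" "U3 \<subseteq> V" using U PV by blast+
  have Ud: "U1 \<inter> U2 = {}" "U2 \<inter> U3 = {}" "U1 \<inter> U3 = {}" using U d by blast+
  have a0: "0 < a" using abc by simp
  have G: "\<exists>T. K_tiling a b c V E T \<and> covered T \<subseteq> U1 \<union> U2 \<union> U3 \<and>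
      real (card (covered T)) \<ge> real (card U1 + card U2 + card U3) - (a+b+c)*((\<epsilon>*m + N)+2*c)/a"
  proof (rule greedy[OF a0 abc(2,3) UV fU Ud _ subset_refl subset_refl subset_refl B])
    fix A1 A2 A3 q1 q2 q3
    assume A: "A1 \<subseteq> U1" "A2 \<subseteq> U2" "A3 \<subseteq> U3" and c: "\<epsilon>*m + N \<le> real (card A1)"
      "\<epsilon>*m + N \<le> real (card A2)" "\<epsilon>*m + N \<le> real (card A3)" and q: "(q1,q2,q3) \<in> perms a b c"
    have AP: "A1 \<subseteq> P1" "A2 \<subseteq> P2" "A3 \<subseteq> P3" using A U by blast+
    show "\<exists>X1 X2 X3. X1 \<subseteq> A1 \<and> X2 \<subseteq> A2 \<and> X3 \<subseteq> A3 \<and> card X1 = q1 \<and> card X2 = q2 \<and> card X3 = q3 \<and>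
         (\<forall>x\<in>X1. \<forall>y\<in>X2. \<forall>z\<in>X3. {x,y,z} \<in> E)"
      by (rule F_lemma[OF abc e dd me EN reg d f m den AP c q])
  qed
  then obtain T where T: "K_tiling a b c V E T" "covered T \<subseteq> U1 \<union> U2 \<union> U3"
    and cT: "real (card (covered T)) \<ge> real (card U1 + card U2 + card U3) - (a+b+c)*((\<epsilon>*m + N)+2*c)/a" by blast
  have "real (card U1 + card U2 + card U3) \<ge> x1 + x2 + x3 - 3" using s by simp
  then show ?thesis using T cT by (intro exI[of _ T]) auto
qed


lemma cone:
  fixes A B C hu hv hw :: real
  assumes abc: "1 \<le> A" "A \<le> B" "B \<le> C" and h: "0 \<le> hu" "hu \<le> hv" "hv \<le> hw"
    and r: "hu / A \<ge> hv / B" "hv / B \<ge> hw / C"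
  shows "y \<in> {hu,hv,hw} \<Longrightarrow> A*(hu+hv+hw) \<le> (A+B+C)*y \<and> (A+B+C)*y \<le> C*(hu+hv+hw)"
proof -
  assume y: "y \<in> {hu,hv,hw}"
  have pos: "A > 0" "B > 0" "C > 0" using abc by auto
  have r2: "hu / A \<ge> hw / C" using r by linarith
  have 1: "A*hv \<le> B*hu" using r(1) pos by (simp add: field_simps)
  have 2: "A*hw \<le> C*hu" using r2 pos by (simp add: field_simps)
  have 3: "B*hw \<le> C*hv" using r(2) pos by (simp add: field_simps)
  have 4: "A*hw \<le> C*hu" using 2 .
  have yl: "hu \<le> y" "y \<le> hw" using y h by auto
  have "A*(hu+hv+hw) \<le> (A+B+C)*hu" using 1 2 by (simp add: algebra_simps)
  also have "\<dots> \<le> (A+B+C)*y" using yl pos by (intro mult_left_mono) auto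
  finally have L: "A*(hu+hv+hw) \<le> (A+B+C)*y" .
  have "(A+B+C)*y \<le> (A+B+C)*hw" using yl pos by (intro mult_left_mono) auto
  also have "\<dots> \<le> C*(hu+hv+hw)" using 3 4 by (simp add: algebra_simps)
  finally show ?thesis using L by simp
qed

lemma partition_sizes:
  assumes "finite I" "finite S"
  shows "(\<Sum>e\<in>I. f e) \<le> card S \<Longrightarrow> \<exists>Q. (\<forall>e\<in>I. Q e \<subseteq> S \<and> card (Q e) = f e) \<and>
     (\<forall>e\<in>I. \<forall>e'\<in>I. e \<noteq> e' \<longrightarrow> Q e \<inter> Q e' = {})"
  using assms(1)
proof (induction I rule: finite_induct)
  case empty then show ?case by auto
next
  case (insert x I)
  have "(\<Sum>e\<in>I. f e) \<le> card S" using insert by simp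
  then obtain Q where Q: "\<forall>e\<in>I. Q e \<subseteq> S \<and> card (Q e) = f e" "\<forall>e\<in>I. \<forall>e'\<in>I. e \<noteq> e' \<longrightarrow> Q e \<inter> Q e' = {}"
    using insert.IH by blast
  have fQ: "\<forall>e\<in>I. finite (Q e)" using Q(1) assms(2) finite_subset by blast
  have "card (\<Union>e\<in>I. Q e) = (\<Sum>e\<in>I. card (Q e))"
    using card_UN_disjoint[OF insert.hyps(1)] fQ Q(2) by blast
  also have "\<dots> = (\<Sum>e\<in>I. f e)" using Q(1) by simp
  finally have cU: "card (\<Union>e\<in>I. Q e) = (\<Sum>e\<in>I. f e)" .
  have sub: "(\<Union>e\<in>I. Q e) \<subseteq> S" using Q by blast
  have "card (S - (\<Union>e\<in>I. Q e)) = card S - (\<Sum>e\<in>I. f e)"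
    using card_Diff_subset[OF finite_subset[OF sub assms(2)] sub] cU by simp
  moreover have "f x + (\<Sum>e\<in>I. f e) \<le> card S" using insert by simp
  ultimately have "f x \<le> card (S - (\<Union>e\<in>I. Q e))" by simp
  then obtain X where X: "X \<subseteq> S - (\<Union>e\<in>I. Q e)" "card X = f x" by (meson obtain_subset_with_card_n)
  define Q' where "Q' = Q(x := X)"
  have Qx: "Q' x = X" unfolding Q'_def by simp
  have QI: "e \<in> I \<Longrightarrow> Q' e = Q e" for e using insert.hyps(2) unfolding Q'_def by auto
  have "\<forall>e\<in>insert x I. Q' e \<subseteq> S \<and> card (Q' e) = f e"
  proof
    fix e assume "e \<in> insert x I"
    then show "Q' e \<subseteq> S \<and> card (Q' e) = f e"
    proof
      assume "e = x" then show ?thesis using Qx X by auto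
    next
      assume "e \<in> I" then show ?thesis using QI Q by auto
    qed
  qed
  moreover have "\<forall>e\<in>insert x I. \<forall>e'\<in>insert x I. e \<noteq> e' \<longrightarrow> Q' e \<inter> Q' e' = {}"
  proof (intro ballI impI)
    fix e e' assume e: "e \<in> insert x I" and e': "e' \<in> insert x I" and ne: "e \<noteq> e'"
    have XQ: "e'' \<in> I \<Longrightarrow> X \<inter> Q e'' = {}" for e'' using X by blast
    show "Q' e \<inter> Q' e' = {}"
    proof (cases "e = x")
      case True
      then have "e' \<in> I" using e' ne by auto
      then show ?thesis using True Qx QI XQ by simp
    next
      case False
      then have eI: "e \<in> I" using e by auto
      show ?thesis
      proof (cases "e' = x")
        case True
        then show ?thesis using eI Qx QI XQ by (simp add: Int_commute)
      next
        case False
        then have "e' \<in> I" using e' by auto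
        then show ?thesis using eI QI Q(2) ne by simp
      qed
    qed
  qed
  ultimately show ?case by blast
qed

lemma edge_arith:
  fixes H m L cov bet \<epsilon> K :: real
  assumes "cov \<ge> H*m - L" "L \<le> K * m * (bet-\<epsilon>)/(1-\<epsilon>)" "H \<ge> K" "K \<ge> 0" "bet > \<epsilon>" "\<epsilon> < 1" "m \<ge> 0"
  shows "cov \<ge> (1-bet)*m/(1-\<epsilon>) * H"
proof -
  have q: "(bet-\<epsilon>)/(1-\<epsilon>) \<ge> 0" using assms by simp
  have "K * m * (bet-\<epsilon>)/(1-\<epsilon>) = K * (m * ((bet-\<epsilon>)/(1-\<epsilon>)))" by simp
  also have "\<dots> \<le> H * (m * ((bet-\<epsilon>)/(1-\<epsilon>)))" using assms q by (intro mult_right_mono) auto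
  finally have "L \<le> H * (m * ((bet-\<epsilon>)/(1-\<epsilon>)))" using assms(2) by linarith
  then have "cov \<ge> H*m - H * (m * ((bet-\<epsilon>)/(1-\<epsilon>)))" using assms(1) by linarith
  also have "H*m - H * (m * ((bet-\<epsilon>)/(1-\<epsilon>))) = (1-bet)*m/(1-\<epsilon>) * H"
    using assms(6) by (simp add: field_simps)
  finally show ?thesis .
qed


lemma M0_exists:
  fixes A B C \<epsilon> Nr :: real
  assumes abc: "1 \<le> A" "A \<le> B" "B \<le> C" and e: "\<epsilon> > 0" and bet: "2*B*C^3*\<epsilon> < 1" and Nr: "Nr \<ge> 0"
  shows "\<exists>M0>0. \<forall>m. m \<ge> M0 \<longrightarrow> m - 2*\<epsilon>*m \<ge> 1 \<and>
     3 + (A+B+C)*(\<epsilon>*m + Nr + 2*C)/A \<le> (3/(B*C^2)) * m * (2*B*C^3*\<epsilon> - \<epsilon>)/(1-\<epsilon>)"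
proof -
  define \<beta> where "\<beta> = 2*B*C^3*\<epsilon>"
  have pos: "A > 0" "B > 0" "C > 0" using abc by auto
  have BC3: "B*C^3 \<ge> 1"
  proof -
    have "C^3 \<ge> 1" using abc by simp
    then show ?thesis using abc mult_mono[of 1 B 1 "C^3"] by simp
  qed
  have b2: "\<beta> \<ge> 2*\<epsilon>" unfolding \<beta>_def using BC3 e mult_right_mono[OF BC3, of "2*\<epsilon>"] by (simp add: algebra_simps)
  have e2: "2*\<epsilon> < 1" using b2 bet unfolding \<beta>_def by simp
  have e1: "1 - \<epsilon> > 0" using e2 e by simp
  have s1: "(A+B+C)/A \<le> 1+B+C"
  proof -
    have "1*B \<le> A*B" "1*C \<le> A*C" using abc pos by (intro mult_right_mono; simp)+
    then have "A+B+C \<le> A*(1+B+C)" by (simp add: algebra_simps)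
    then show ?thesis using pos by (simp add: divide_le_eq mult.commute)
  qed
  have BC2: "B*C^2 > 0" using pos by simp
  have k1: "(1+B+C)*(B*C^2) \<le> 3*(B*C^3)"
  proof -
    have "B*C^2 \<le> B*C^3" using pos abc by (simp add: power_increasing)
    moreover have "B*(B*C^2) \<le> B*C^3"
    proof -
      have "B*(B*C^2) = B*B*C^2" by simp
      also have "\<dots> \<le> B*C*C^2" using abc pos by (intro mult_right_mono mult_left_mono) auto
      also have "\<dots> = B*C^3" by (simp add: power3_eq_cube power2_eq_square)
      finally show ?thesis .
    qed
    moreover have "C*(B*C^2) = B*C^3" by (simp add: power3_eq_cube power2_eq_square)
    moreover have "(1+B+C)*(B*C^2) = B*C^2 + B*(B*C^2) + C*(B*C^2)" by (simp add: algebra_simps)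
    ultimately show ?thesis by linarith
  qed
  have k2: "(1+B+C)*(B*C^2)*(1-\<epsilon>) < 3*(2*B*C^3 - 1)"
  proof -
    have "(1+B+C)*(B*C^2)*(1-\<epsilon>) < (1+B+C)*(B*C^2)" using e BC2 pos by simp
    moreover have "3*(2*B*C^3 - 1) = 6*(B*C^3) - 3" by (simp add: algebra_simps)
    ultimately show ?thesis using k1 BC3 by linarith
  qed
  define g where "g = 3*(\<beta>-\<epsilon>)/(B*C^2*(1-\<epsilon>)) - (A+B+C)*\<epsilon>/A"
  have gpos: "g > 0"
  proof -
    have Z: "(B*C^2)*(1-\<epsilon>) > 0" using BC2 e1 by simp
    have "((1+B+C)*(B*C^2)*(1-\<epsilon>))*\<epsilon> < (3*(2*B*C^3 - 1))*\<epsilon>" using k2 e by (rule mult_strict_right_mono)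
    then have "((1+B+C)*\<epsilon>)*((B*C^2)*(1-\<epsilon>)) < 3*(2*B*C^3 - 1)*\<epsilon>" by (simp add: algebra_simps)
    then have "(1+B+C)*\<epsilon> < 3*(2*B*C^3 - 1)*\<epsilon>/((B*C^2)*(1-\<epsilon>))"
      using Z by (simp add: pos_less_divide_eq)
    also have "3*(2*B*C^3 - 1)*\<epsilon>/((B*C^2)*(1-\<epsilon>)) = 3*(\<beta>-\<epsilon>)/(B*C^2*(1-\<epsilon>))"
      unfolding \<beta>_def by (simp add: algebra_simps)
    finally have "(1+B+C)*\<epsilon> < 3*(\<beta>-\<epsilon>)/(B*C^2*(1-\<epsilon>))" .
    moreover have "(A+B+C)*\<epsilon>/A \<le> (1+B+C)*\<epsilon>"
    proof -
      have "(A+B+C)*\<epsilon>/A = ((A+B+C)/A)*\<epsilon>" by simp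
      also have "\<dots> \<le> (1+B+C)*\<epsilon>" using e by (intro mult_right_mono[OF s1]) simp
      finally show ?thesis .
    qed
    ultimately show ?thesis unfolding g_def by linarith
  qed
  define M0 where "M0 = max 1 (max (1/(1-2*\<epsilon>)) ((3 + (A+B+C)*(Nr+2*C)/A)/g))"
  show ?thesis
  proof (intro exI[of _ M0] conjI allI impI)
    show "M0 > 0" unfolding M0_def by simp
    fix m assume m: "m \<ge> M0"
    have m1: "m \<ge> 1/(1-2*\<epsilon>)" "m \<ge> (3 + (A+B+C)*(Nr+2*C)/A)/g" using m unfolding M0_def by auto
    show "m - 2*\<epsilon>*m \<ge> 1"
    proof -
      have "1 \<le> m*(1-2*\<epsilon>)" using m1(1) e2 by (simp add: divide_le_eq)
      then show ?thesis by (simp add: algebra_simps)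
    qed
    have "3 + (A+B+C)*(Nr+2*C)/A \<le> g*m" using m1(2) gpos by (simp add: divide_le_eq mult.commute)
    moreover have "(3/(B*C^2)) * m * (2*B*C^3*\<epsilon> - \<epsilon>)/(1-\<epsilon>) = m*(3*(\<beta>-\<epsilon>)/(B*C^2*(1-\<epsilon>)))"
      unfolding \<beta>_def by simp
    moreover have "(A+B+C)*(\<epsilon>*m + Nr + 2*C)/A = m*((A+B+C)*\<epsilon>/A) + (A+B+C)*(Nr+2*C)/A"
      using pos by (simp add: field_simps)
    ultimately show "3 + (A+B+C)*(\<epsilon>*m + Nr + 2*C)/A \<le> (3/(B*C^2)) * m * (2*B*C^3*\<epsilon> - \<epsilon>)/(1-\<epsilon>)"
      unfolding g_def by (simp add: algebra_simps)
  qed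
qed



lemma weight_nonneg:
  assumes "frac_hom_tiling a b c VG EG h" "finite VG" "finite EG"
  shows "tiling_weight VG EG h \<ge> 0"
  using assms unfolding frac_hom_tiling_def tiling_weight_def by (auto intro!: sum_nonneg)

lemma flr: fixes x :: real assumes "x \<ge> 0" shows "real (nat \<lfloor>x\<rfloor>) \<le> x" "x < real (nat \<lfloor>x\<rfloor>) + 1"
proof -
  have "real (nat \<lfloor>x\<rfloor>) = of_int \<lfloor>x\<rfloor>" using assms by simp
  then show "real (nat \<lfloor>x\<rfloor>) \<le> x" "x < real (nat \<lfloor>x\<rfloor>) + 1" using floor_correct[of x] by linarith+
qed

theorem proposition4p5:
  fixes a b c :: nat and \<epsilon> d :: real
  assumes "1 \<le> a" "a \<le> b" "b \<le> c"
    and "\<epsilon> > 0" and "d \<ge> 2 * real b * real c ^ 2 * \<epsilon>"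
  shows "\<forall>t::nat. \<exists>n0::nat. \<forall>(V::'a set) E P h.
      three_graph V E \<and> card V \<ge> n0 \<and>
      regular_partition V E \<epsilon> t P \<and>
      frac_hom_tiling a b c {1..t} (cluster_edges E \<epsilon> d t P) h \<and>
      hmin_ge {1..t} (cluster_edges E \<epsilon> d t P) h (1 / (real b * real c ^ 2))
      \<longrightarrow> (\<exists>\<T>. K_tiling a b c V E \<T> \<and>
             real (card (covered \<T>)) \<ge>
               (1 - 2 * real b * real c ^ 3 * \<epsilon>)
               * tiling_weight {1..t} (cluster_edges E \<epsilon> d t P) h
               * real (card V) / real t)"
proof (intro allI)
  fix t :: nat
  note abc = assms(1-3) and e = assms(4) and dd = assms(5)
  define \<beta> where "\<beta> = 2 * real b * real c ^ 3 * \<epsilon>"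
  have finR: "finite (cluster_edges E \<epsilon> d t P)" for E and P :: "nat \<Rightarrow> 'a set"
  proof -
    have "cluster_edges E \<epsilon> d t P \<subseteq> Pow {1..t}" unfolding cluster_edges_def by auto
    then show ?thesis by (rule finite_subset) simp
  qed
  have empty_til: "K_tiling a b c V E {}" for V :: "'a set" and E by (simp add: K_tiling_def)
  have cov_empty: "covered {} = ({} :: 'a set)" by (simp add: covered_def)
  show "\<exists>n0::nat. \<forall>(V::'a set) E P h.
      three_graph V E \<and> card V \<ge> n0 \<and>
      regular_partition V E \<epsilon> t P \<and>
      frac_hom_tiling a b c {1..t} (cluster_edges E \<epsilon> d t P) h \<and>
      hmin_ge {1..t} (cluster_edges E \<epsilon> d t P) h (1 / (real b * real c ^ 2))
      \<longrightarrow> (\<exists>\<T>. K_tiling a b c V E \<T> \<and>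
             real (card (covered \<T>)) \<ge>
               (1 - 2 * real b * real c ^ 3 * \<epsilon>)
               * tiling_weight {1..t} (cluster_edges E \<epsilon> d t P) h
               * real (card V) / real t)"
  proof (cases "\<beta> < 1 \<and> t > 0")
    case False
    show ?thesis
    proof (intro exI[of _ 0] allI impI)
      fix V :: "'a set" and E P h
      assume H: "three_graph V E \<and> card V \<ge> 0 \<and> regular_partition V E \<epsilon> t P \<and>
        frac_hom_tiling a b c {1..t} (cluster_edges E \<epsilon> d t P) h \<and>
        hmin_ge {1..t} (cluster_edges E \<epsilon> d t P) h (1 / (real b * real c ^ 2))"
      have W: "tiling_weight {1..t} (cluster_edges E \<epsilon> d t P) h \<ge> 0"
        using H weight_nonneg finR by blast
      have "(1 - \<beta>) * tiling_weight {1..t} (cluster_edges E \<epsilon> d t P) h * real (card V) / real t \<le> 0"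
      proof (cases "t = 0")
        case True then show ?thesis by simp
      next
        case False
        then have "1 - \<beta> \<le> 0" using \<open>\<not> (\<beta> < 1 \<and> t > 0)\<close> by simp
        then have "(1 - \<beta>) * tiling_weight {1..t} (cluster_edges E \<epsilon> d t P) h \<le> 0"
          using W by (simp add: mult_nonpos_nonneg)
        then show ?thesis by (simp add: divide_nonpos_nonneg mult_nonpos_nonneg)
      qed
      then show "\<exists>\<T>. K_tiling a b c V E \<T> \<and>
             real (card (covered \<T>)) \<ge>
               (1 - 2 * real b * real c ^ 3 * \<epsilon>)
               * tiling_weight {1..t} (cluster_edges E \<epsilon> d t P) h
               * real (card V) / real t"
        using empty_til cov_empty unfolding \<beta>_def by (intro exI[of _ "{}"]) auto
    qed
  next
    case True
    then have bet: "\<beta> < 1" and tpos: "t > 0" by auto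
    have ar: "real a \<ge> 1" "real a \<le> real b" "real b \<le> real c" using abc by auto
    have BC3: "real b * real c ^ 3 \<ge> 1"
    proof -
      have "real c ^ 3 \<ge> 1" using ar by simp
      then show ?thesis using ar mult_mono[of 1 "real b" 1 "real c ^ 3"] by simp
    qed
    have b2: "\<beta> \<ge> 2*\<epsilon>" unfolding \<beta>_def using mult_right_mono[OF BC3, of "2*\<epsilon>"] e by (simp add: algebra_simps)
    have e2: "2*\<epsilon> < 1" using b2 bet by simp
    have e1: "\<epsilon> \<le> 1" using e2 e by simp
    have bete: "\<beta> > \<epsilon>" using b2 e by simp
    have c1: "c \<ge> 1" using abc by simp
    note ex = erdos3[OF e e1 c1 c1 c1]
    then obtain N :: nat where EN: "\<forall>(A1::'a set) (A2::'a set) (A3::'a set) Q. finite A1 \<and> finite A2 \<and> finite A3 \<and>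
     card A1 \<ge> N \<and> card A2 \<ge> N \<and> card A3 \<ge> N \<and>
     real (card {(x,y,z). x\<in>A1 \<and> y\<in>A2 \<and> z\<in>A3 \<and> Q x y z}) \<ge> \<epsilon> * card A1 * card A2 * card A3 \<longrightarrow>
     (\<exists>X\<subseteq>A1. \<exists>Y\<subseteq>A2. \<exists>Z\<subseteq>A3. card X = c \<and> card Y = c \<and> card Z = c \<and>
        (\<forall>x\<in>X. \<forall>y\<in>Y. \<forall>z\<in>Z. Q x y z))" ..
    have betb: "2 * real b * real c ^ 3 * \<epsilon> < 1" using bet unfolding \<beta>_def .
    obtain M0 where M0: "M0 > 0" "\<forall>m. m \<ge> M0 \<longrightarrow> m - 2*\<epsilon>*m \<ge> 1 \<and>
       3 + (real a + real b + real c)*(\<epsilon>*m + real N + 2*real c)/real a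
         \<le> (3/(real b*real c^2)) * m * (2*real b*real c^3*\<epsilon> - \<epsilon>)/(1-\<epsilon>)"
      using M0_exists[OF ar e betb, of "real N"] by auto
    define n0 where "n0 = nat \<lceil>real t * M0/(1-\<epsilon>)\<rceil>"
    show ?thesis
    proof (intro exI[of _ n0] allI impI, elim conjE)
      fix V :: "'a set" and E P h
      assume tg: "three_graph V E" and nV: "card V \<ge> n0" and rp: "regular_partition V E \<epsilon> t P"
        and fh: "frac_hom_tiling a b c {1..t} (cluster_edges E \<epsilon> d t P) h"
        and hm: "hmin_ge {1..t} (cluster_edges E \<epsilon> d t P) h (1 / (real b * real c ^ 2))"
      define R where "R = cluster_edges E \<epsilon> d t P"
      define n where "n = card V"
      define m where "m = card (P 1)"
      define W where "W = tiling_weight {1..t} R h"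
      have fV: "finite V" using tg unfolding three_graph_def by simp
      have rpu: "V = (\<Union>i\<in>{0..t}. P i) \<and> (\<forall>i\<in>{0..t}. \<forall>j\<in>{0..t}. i \<noteq> j \<longrightarrow> P i \<inter> P j = {}) \<and>
        (\<forall>i\<in>{1..t}. \<forall>j\<in>{1..t}. card (P i) = card (P j)) \<and> real (card (P 0)) \<le> \<epsilon> * real (card V)"
        using rp unfolding regular_partition_def by (elim conjE) (intro conjI)
      note Vun = conjunct1[OF rpu] and Pdis = conjunct1[OF conjunct2[OF rpu]]
        and Pcard = conjunct1[OF conjunct2[OF conjunct2[OF rpu]]]
        and P0 = conjunct2[OF conjunct2[OF conjunct2[OF rpu]]]
      have PV: "i \<in> {0..t} \<Longrightarrow> P i \<subseteq> V" for i using Vun by auto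
      have fP: "i \<in> {0..t} \<Longrightarrow> finite (P i)" for i using PV fV finite_subset by blast
      have one: "(1::nat) \<in> {1..t}" using tpos by simp
      have cm: "i \<in> {1..t} \<Longrightarrow> card (P i) = m" for i unfolding m_def using bspec[OF bspec[OF Pcard], of i 1] one by simp
      have fR: "finite R" unfolding R_def by (rule finR)
      have cardV: "card V = card (P 0) + t * m"
      proof -
        have "card V = (\<Sum>i\<in>{0..t}. card (P i))" unfolding Vun
          by (rule card_UN_disjoint) (use fP Pdis in auto)
        also have "{0..t} = insert 0 {1..t}" by auto
        also have "(\<Sum>i\<in>insert 0 {1..t}. card (P i)) = card (P 0) + (\<Sum>i\<in>{1..t}. card (P i))" by simp
        also have "(\<Sum>i\<in>{1..t}. card (P i)) = t * m" using cm by simp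
        finally show ?thesis .
      qed
      have tm: "real t * real m \<ge> (1-\<epsilon>) * real n"
        using cardV P0 unfolding n_def by (simp add: algebra_simps)
      have n0le: "real t * M0/(1-\<epsilon>) \<le> real n"
      proof -
        have "real t * M0/(1-\<epsilon>) \<le> real n0" unfolding n0_def by (rule real_nat_ceiling_ge)
        also have "\<dots> \<le> real n" using nV unfolding n_def by simp
        finally show ?thesis .
      qed
      have mM0: "real m \<ge> M0"
      proof -
        have "real t * M0 \<le> (1-\<epsilon>) * real n" using n0le e2 by (simp add: divide_le_eq mult.commute)
        then have "real t * M0 \<le> real t * real m" using tm by linarith
        then show ?thesis using tpos by simp
      qed
      have me: "real m - 2*\<epsilon>*m \<ge> 1" and loss: "3 + (real a + real b + real c)*(\<epsilon>*m + real N + 2*real c)/real a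
         \<le> (3/(real b*real c^2)) * m * (2*real b*real c^3*\<epsilon> - \<epsilon>)/(1-\<epsilon>)" using M0(2) mM0 by auto
      show "\<exists>\<T>. K_tiling a b c V E \<T> \<and>
             real (card (covered \<T>)) \<ge>
               (1 - 2 * real b * real c ^ 3 * \<epsilon>)
               * tiling_weight {1..t} (cluster_edges E \<epsilon> d t P) h
               * real (card V) / real t"
      proof -
      have fhu: "(\<forall>v\<in>{1..t}. \<forall>e\<in>R. 0 \<le> h v e \<and> h v e \<le> 1) \<and>
        (\<forall>v\<in>{1..t}. \<forall>e\<in>R. v \<notin> e \<longrightarrow> h v e = 0) \<and>
        (\<forall>v\<in>{1..t}. (\<Sum>e\<in>R. h v e) \<le> 1) \<and>
        (\<forall>e\<in>R. \<exists>u v w. e = {u, v, w} \<and> u \<noteq> v \<and> v \<noteq> w \<and> u \<noteq> w \<and>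
          h u e \<le> h v e \<and> h v e \<le> h w e \<and>
          h u e / real a \<ge> h v e / real b \<and> h v e / real b \<ge> h w e / real c)"
        using fh unfolding frac_hom_tiling_def R_def by (elim conjE) (intro conjI)
      note hnn = conjunct1[OF fhu] and hz = conjunct1[OF conjunct2[OF fhu]]
        and hsum = conjunct1[OF conjunct2[OF conjunct2[OF fhu]]]
        and hlab = conjunct2[OF conjunct2[OF conjunct2[OF fhu]]]
      have hmn: "\<forall>v\<in>{1..t}. \<forall>e\<in>R. h v e \<noteq> 0 \<longrightarrow> 1 / (real b * real c ^ 2) \<le> h v e"
        using hm unfolding hmin_ge_def R_def .
      have eSub: "e \<in> R \<Longrightarrow> e \<subseteq> {1..t}" for e unfolding R_def cluster_edges_def by auto
      have mnn: "real m \<ge> 0" by simp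
      have pieces: "\<forall>i\<in>{1..t}. \<exists>Qi. (\<forall>e\<in>R. Qi e \<subseteq> P i \<and> card (Qi e) = nat \<lfloor>h i e * m\<rfloor>) \<and>
          (\<forall>e\<in>R. \<forall>e'\<in>R. e \<noteq> e' \<longrightarrow> Qi e \<inter> Qi e' = {})"
      proof
        fix i assume i: "i \<in> {1..t}"
        have "real (\<Sum>e\<in>R. nat \<lfloor>h i e * m\<rfloor>) = (\<Sum>e\<in>R. real (nat \<lfloor>h i e * m\<rfloor>))" by simp
        also have "\<dots> \<le> (\<Sum>e\<in>R. h i e * m)"
          by (rule sum_mono, rule flr) (use hnn i in simp)
        also have "\<dots> = (\<Sum>e\<in>R. h i e) * m" by (simp add: sum_distrib_right)
        also have "\<dots> \<le> 1 * real m" using hsum i by (intro mult_right_mono) auto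
        finally have "real (\<Sum>e\<in>R. nat \<lfloor>h i e * m\<rfloor>) \<le> 1 * real m" .
        then have "(\<Sum>e\<in>R. nat \<lfloor>h i e * m\<rfloor>) \<le> m" by (simp only: mult_1 of_nat_le_iff)
        then have "(\<Sum>e\<in>R. nat \<lfloor>h i e * m\<rfloor>) \<le> card (P i)" using cm[OF i] by simp
        then show "\<exists>Qi. (\<forall>e\<in>R. Qi e \<subseteq> P i \<and> card (Qi e) = nat \<lfloor>h i e * m\<rfloor>) \<and>
          (\<forall>e\<in>R. \<forall>e'\<in>R. e \<noteq> e' \<longrightarrow> Qi e \<inter> Qi e' = {})"
          using partition_sizes[OF fR fP[of i]] i by simp
      qed
      from bchoice[OF pieces] obtain Q where Q: "\<forall>i\<in>{1..t}. (\<forall>e\<in>R. Q i e \<subseteq> P i \<and> card (Q i e) = nat \<lfloor>h i e * m\<rfloor>) \<and>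
          (\<forall>e\<in>R. \<forall>e'\<in>R. e \<noteq> e' \<longrightarrow> Q i e \<inter> Q i e' = {})" ..
      have Qsub: "i \<in> {1..t} \<Longrightarrow> e \<in> R \<Longrightarrow> Q i e \<subseteq> P i" for i e using Q by blast
      have Qcard: "i \<in> {1..t} \<Longrightarrow> e \<in> R \<Longrightarrow> card (Q i e) = nat \<lfloor>h i e * m\<rfloor>" for i e using Q by blast
      have Qdis: "i \<in> {1..t} \<Longrightarrow> e \<in> R \<Longrightarrow> e' \<in> R \<Longrightarrow> e \<noteq> e' \<Longrightarrow> Q i e \<inter> Q i e' = {}" for i e e' using Q by blast
      define \<kappa> where "\<kappa> = (1-\<beta>)*m/(1-\<epsilon>)"
      have edge: "\<forall>e\<in>R. \<exists>T. K_tiling a b c V E T \<and> covered T \<subseteq> (\<Union>y\<in>e. Q y e) \<and>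
          real (card (covered T)) \<ge> \<kappa> * (\<Sum>y\<in>e. h y e)"
      proof
        fix e assume eR: "e \<in> R"
        show "\<exists>T. K_tiling a b c V E T \<and> covered T \<subseteq> (\<Union>y\<in>e. Q y e) \<and>
          real (card (covered T)) \<ge> \<kappa> * (\<Sum>y\<in>e. h y e)"
        proof -
        have "\<exists>i j l. e = {i,j,l} \<and> i \<in> {1..t} \<and> j \<in> {1..t} \<and> l \<in> {1..t} \<and> i \<noteq> j \<and> j \<noteq> l \<and> i \<noteq> l
          \<and> eps_regular E \<epsilon> (P i) (P j) (P l) \<and> density E (P i) (P j) (P l) \<ge> d"
          using eR unfolding R_def cluster_edges_def by (simp only: mem_Collect_eq)
        then obtain i where "\<exists>j l. e = {i,j,l} \<and> i \<in> {1..t} \<and> j \<in> {1..t} \<and> l \<in> {1..t} \<and> i \<noteq> j \<and> j \<noteq> l \<and> i \<noteq> l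
          \<and> eps_regular E \<epsilon> (P i) (P j) (P l) \<and> density E (P i) (P j) (P l) \<ge> d" ..
        then obtain j where "\<exists>l. e = {i,j,l} \<and> i \<in> {1..t} \<and> j \<in> {1..t} \<and> l \<in> {1..t} \<and> i \<noteq> j \<and> j \<noteq> l \<and> i \<noteq> l
          \<and> eps_regular E \<epsilon> (P i) (P j) (P l) \<and> density E (P i) (P j) (P l) \<ge> d" ..
        then obtain l where eijl: "e = {i,j,l} \<and> i \<in> {1..t} \<and> j \<in> {1..t} \<and> l \<in> {1..t} \<and> i \<noteq> j \<and> j \<noteq> l \<and> i \<noteq> l
          \<and> eps_regular E \<epsilon> (P i) (P j) (P l) \<and> density E (P i) (P j) (P l) \<ge> d" ..
        have eij: "e = {i,j,l}" "i \<in> {1..t}" "j \<in> {1..t}" "l \<in> {1..t}" "i \<noteq> j" "j \<noteq> l" "i \<noteq> l"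
          using eijl by blast+
        have reg: "eps_regular E \<epsilon> (P i) (P j) (P l)" and den: "density E (P i) (P j) (P l) \<ge> d"
          using eijl by blast+
        define Hs where "Hs = (\<Sum>y\<in>e. h y e)"
        have Hs1: "Hs = h i e + h j e + h l e" unfolding Hs_def using eij by simp
        have "\<exists>u v w. e = {u, v, w} \<and> u \<noteq> v \<and> v \<noteq> w \<and> u \<noteq> w \<and> h u e \<le> h v e \<and> h v e \<le> h w e \<and> h u e / real a \<ge> h v e / real b \<and> h v e / real b \<ge> h w e / real c" using bspec[OF hlab eR] .
        then obtain u where "\<exists>v w. e = {u, v, w} \<and> u \<noteq> v \<and> v \<noteq> w \<and> u \<noteq> w \<and> h u e \<le> h v e \<and> h v e \<le> h w e \<and> h u e / real a \<ge> h v e / real b \<and> h v e / real b \<ge> h w e / real c" ..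
        then obtain v where "\<exists>w. e = {u, v, w} \<and> u \<noteq> v \<and> v \<noteq> w \<and> u \<noteq> w \<and> h u e \<le> h v e \<and> h v e \<le> h w e \<and> h u e / real a \<ge> h v e / real b \<and> h v e / real b \<ge> h w e / real c" ..
        then obtain w where uvwa: "e = {u, v, w} \<and> u \<noteq> v \<and> v \<noteq> w \<and> u \<noteq> w \<and> h u e \<le> h v e \<and> h v e \<le> h w e \<and> h u e / real a \<ge> h v e / real b \<and> h v e / real b \<ge> h w e / real c" ..
        have uvw: "e = {u,v,w}" "u \<noteq> v" "v \<noteq> w" "u \<noteq> w" "h u e \<le> h v e" "h v e \<le> h w e"
          "h u e / real a \<ge> h v e / real b" "h v e / real b \<ge> h w e / real c"
          using uvwa by blast+
        have Hs2: "Hs = h u e + h v e + h w e" unfolding Hs_def using uvw by simp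
        have ut: "u \<in> {1..t}" using eSub[OF eR] uvw(1) by blast
        have u0: "0 \<le> h u e" using hnn ut eR by blast
        have cz: "a*Hs \<le> (real a+b+c)*h z e \<and> (real a+b+c)*h z e \<le> c*Hs" if z: "z \<in> e" for z
        proof -
          have "h z e \<in> {h u e, h v e, h w e}" using z uvw(1) by auto
          from cone[OF ar u0 uvw(5,6,7,8) this] show ?thesis unfolding Hs2 by simp
        qed
        have cm_: "a*(Hs*m) \<le> (real a+b+c)*(h z e*m) \<and> (real a+b+c)*(h z e*m) \<le> c*(Hs*m)" if z: "z \<in> e" for z
        proof -
          have "a*Hs*m \<le> (real a+b+c)*h z e*m" "(real a+b+c)*h z e*m \<le> c*Hs*m"
            using cz[OF z] by (intro mult_right_mono; simp)+
          then show ?thesis by (simp add: mult.assoc)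
        qed
        have iel: "i \<in> e" "j \<in> e" "l \<in> e" using eij by auto
        have xs: "Hs*m = h i e*m + h j e*m + h l e*m" unfolding Hs1 by (simp add: algebra_simps)
        have lo: "a*(h i e*m + h j e*m + h l e*m) \<le> (real a+b+c)*(h i e*m)"
          "a*(h i e*m + h j e*m + h l e*m) \<le> (real a+b+c)*(h j e*m)"
          "a*(h i e*m + h j e*m + h l e*m) \<le> (real a+b+c)*(h l e*m)"
          using cm_[OF iel(1)] cm_[OF iel(2)] cm_[OF iel(3)] unfolding xs by auto
        have hi: "(real a+b+c)*(h i e*m) \<le> c*(h i e*m + h j e*m + h l e*m)"
          "(real a+b+c)*(h j e*m) \<le> c*(h i e*m + h j e*m + h l e*m)"
          "(real a+b+c)*(h l e*m) \<le> c*(h i e*m + h j e*m + h l e*m)"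
          using cm_[OF iel(1)] cm_[OF iel(2)] cm_[OF iel(3)] unfolding xs by auto
        have h0: "0 \<le> h i e * m" "0 \<le> h j e * m" "0 \<le> h l e * m"
          using hnn eij eR by auto
        have sb: "real (card (Q i e)) \<le> h i e * m" "h i e * m < real (card (Q i e)) + 1"
          "real (card (Q j e)) \<le> h j e * m" "h j e * m < real (card (Q j e)) + 1"
          "real (card (Q l e)) \<le> h l e * m" "h l e * m < real (card (Q l e)) + 1"
          using flr[OF h0(1)] flr[OF h0(2)] flr[OF h0(3)] Qcard[OF eij(2) eR] Qcard[OF eij(3) eR] Qcard[OF eij(4) eR]
          by simp_all
        have i0: "i \<in> {0..t}" "j \<in> {0..t}" "l \<in> {0..t}" using eij by auto
        have Pd: "P i \<inter> P j = {}" "P j \<inter> P l = {}" "P i \<inter> P l = {}" using Pdis i0 eij by blast+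
        obtain T where T: "K_tiling a b c V E T" "covered T \<subseteq> Q i e \<union> Q j e \<union> Q l e"
          and cT: "real (card (covered T)) \<ge> h i e*m + h j e*m + h l e*m - 3 - (real a+b+c)*(\<epsilon>*m + N + 2*c)/a"
          using edge_tiling[OF abc e dd me EN reg Pd fP[OF i0(1)] fP[OF i0(2)] fP[OF i0(3)]
            PV[OF i0(1)] PV[OF i0(2)] PV[OF i0(3)] cm[OF eij(2)] cm[OF eij(3)] cm[OF eij(4)] den
            Qsub[OF eij(2) eR] Qsub[OF eij(3) eR] Qsub[OF eij(4) eR] sb lo hi] by blast
        have covsub: "covered T \<subseteq> (\<Union>y\<in>e. Q y e)" using T(2) iel by blast
        have "real (card (covered T)) \<ge> \<kappa> * Hs"
        proof (cases "Hs = 0")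
          case True then show ?thesis by simp
        next
          case False
          have Hs0: "Hs \<ge> 0" unfolding Hs_def using hnn eSub[OF eR] eR by (intro sum_nonneg) auto
          then have Hsp: "Hs > 0" using False by simp
          have hpos: "h z e \<ge> 1 / (real b * real c ^ 2)" if z: "z \<in> e" for z
          proof -
            have "a*Hs > 0" using Hsp abc by simp
            then have "(real a+b+c)*h z e > 0" using cz[OF z] by linarith
            then have "h z e \<noteq> 0" by auto
            moreover have "z \<in> {1..t}" using eSub[OF eR] z by blast
            ultimately show ?thesis using hmn eR by blast
          qed
          have HsK: "Hs \<ge> 3 / (real b * real c ^ 2)"
            using hpos[OF iel(1)] hpos[OF iel(2)] hpos[OF iel(3)] unfolding Hs1
            by (simp add: divide_inverse)
          have cT': "real (card (covered T)) \<ge> Hs*m - (3 + (real a+b+c)*(\<epsilon>*m + N + 2*c)/a)"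
            using cT xs by simp
          have Kn: "3 / (real b * real c ^ 2) \<ge> 0" by simp
          have loss': "3 + (real a+b+c)*(\<epsilon>*m + N + 2*c)/a \<le> (3/(real b*real c^2)) * m * (\<beta> - \<epsilon>)/(1-\<epsilon>)"
            using loss unfolding \<beta>_def by simp
          show ?thesis unfolding \<kappa>_def
            using edge_arith[OF cT' loss' HsK Kn bete _ mnn] e2 by simp
        qed
        then show "\<exists>T. K_tiling a b c V E T \<and> covered T \<subseteq> (\<Union>y\<in>e. Q y e) \<and>
          real (card (covered T)) \<ge> \<kappa> * (\<Sum>y\<in>e. h y e)"
          using T(1) covsub unfolding Hs_def by blast
        qed
      qed
      from bchoice[OF edge] obtain TT where TT: "\<forall>e\<in>R. K_tiling a b c V E (TT e) \<and> covered (TT e) \<subseteq> (\<Union>y\<in>e. Q y e) \<and>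
          real (card (covered (TT e))) \<ge> \<kappa> * (\<Sum>y\<in>e. h y e)" ..
      define Tall where "Tall = (\<Union>e\<in>R. TT e)"
      define reg where "reg e = (\<Union>y\<in>e. Q y e)" for e
      have RD: "e \<in> R \<Longrightarrow> e' \<in> R \<Longrightarrow> e \<noteq> e' \<Longrightarrow> reg e \<inter> reg e' = {}" for e e'
      proof -
        assume e: "e \<in> R" and e': "e' \<in> R" and ne: "e \<noteq> e'"
        have "Q y e \<inter> Q y' e' = {}" if y: "y \<in> e" and y': "y' \<in> e'" for y y'
        proof (cases "y = y'")
          case True
          have "y \<in> {1..t}" using eSub[OF e] y by auto
          then show ?thesis using Qdis[OF _ e e' ne] True by simp
        next
          case False
          have yt: "y \<in> {0..t}" "y' \<in> {0..t}" using eSub[OF e] eSub[OF e'] y y' by auto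
          have yt1: "y \<in> {1..t}" "y' \<in> {1..t}" using eSub[OF e] eSub[OF e'] y y' by (auto simp del: atLeastAtMost_iff)
          have "P y \<inter> P y' = {}" using Pdis yt False by blast
          moreover have "Q y e \<subseteq> P y" "Q y' e' \<subseteq> P y'" using Qsub[OF yt1(1) e] Qsub[OF yt1(2) e'] by auto
          ultimately show ?thesis by blast
        qed
        then show ?thesis unfolding reg_def by blast
      qed
      have fcov: "e \<in> R \<Longrightarrow> finite (covered (TT e))" for e
      proof -
        assume e: "e \<in> R"
        have "reg e \<subseteq> V" unfolding reg_def using Qsub eSub[OF e] PV e by fastforce
        then show ?thesis using TT e fV finite_subset unfolding reg_def by metis
      qed
      have tiling: "K_tiling a b c V E Tall"
        unfolding K_tiling_def
      proof (intro conjI ballI impI)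
        fix K assume "K \<in> Tall"
        then obtain e where "e \<in> R" "K \<in> TT e" unfolding Tall_def by blast
        then show "K_copy a b c V E K" using TT unfolding K_tiling_def by blast
      next
        fix K K' assume K: "K \<in> Tall" and K': "K' \<in> Tall" and ne: "K \<noteq> K'"
        obtain e where e: "e \<in> R" "K \<in> TT e" using K unfolding Tall_def by blast
        obtain e' where e': "e' \<in> R" "K' \<in> TT e'" using K' unfolding Tall_def by blast
        show "copy_verts K \<inter> copy_verts K' = {}"
        proof (cases "e = e'")
          case True
          then show ?thesis using TT e e' ne unfolding K_tiling_def by blast
        next
          case False
          have "copy_verts K \<subseteq> reg e" using TT e unfolding covered_def reg_def by blast
          moreover have "copy_verts K' \<subseteq> reg e'" using TT e' unfolding covered_def reg_def by blast
          ultimately show ?thesis using RD[OF e(1) e'(1) False] by blast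
        qed
      qed
      have covA: "covered Tall = (\<Union>e\<in>R. covered (TT e))" unfolding Tall_def covered_def by blast
      have cardA: "card (covered Tall) = (\<Sum>e\<in>R. card (covered (TT e)))"
        unfolding covA
      proof (rule card_UN_disjoint[OF fR])
        show "\<forall>e\<in>R. finite (covered (TT e))" using fcov by blast
        show "\<forall>e\<in>R. \<forall>e'\<in>R. e \<noteq> e' \<longrightarrow> covered (TT e) \<inter> covered (TT e') = {}"
        proof (intro ballI impI)
          fix e e' assume e: "e \<in> R" and e': "e' \<in> R" and ne: "e \<noteq> e'"
          have "covered (TT e) \<subseteq> reg e" "covered (TT e') \<subseteq> reg e'" using TT e e' unfolding reg_def by blast+
          then show "covered (TT e) \<inter> covered (TT e') = {}" using RD[OF e e' ne] by blast
        qed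
      qed
      have Wsum: "W = (\<Sum>e\<in>R. \<Sum>y\<in>e. h y e)"
      proof -
        have "W = (\<Sum>v\<in>{1..t}. \<Sum>e\<in>R. h v e)" unfolding W_def tiling_weight_def ..
        also have "\<dots> = (\<Sum>e\<in>R. \<Sum>v\<in>{1..t}. h v e)" by (rule sum.swap)
        also have "\<dots> = (\<Sum>e\<in>R. \<Sum>y\<in>e. h y e)"
        proof (rule sum.cong[OF refl])
          fix e assume e: "e \<in> R"
          show "(\<Sum>v\<in>{1..t}. h v e) = (\<Sum>y\<in>e. h y e)"
            by (rule sum.mono_neutral_right) (use eSub[OF e] hz e in auto)
        qed
        finally show ?thesis .
      qed
      have "real (card (covered Tall)) = (\<Sum>e\<in>R. real (card (covered (TT e))))" unfolding cardA by simp
      also have "\<dots> \<ge> (\<Sum>e\<in>R. \<kappa> * (\<Sum>y\<in>e. h y e))" using TT by (intro sum_mono) blast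
      finally have cge: "real (card (covered Tall)) \<ge> \<kappa> * W" unfolding Wsum by (simp add: sum_distrib_left)
      have W0: "W \<ge> 0" unfolding W_def R_def using fh weight_nonneg finR by blast
      have G0: "(1-\<beta>)*W \<ge> 0" using W0 bet by simp
      have nm: "real n / real t \<le> real m / (1-\<epsilon>)"
        using tm tpos e2 by (simp add: field_simps)
      have "(1-\<beta>)*W*real n/real t = ((1-\<beta>)*W) * (real n / real t)" by simp
      also have "\<dots> \<le> ((1-\<beta>)*W) * (real m / (1-\<epsilon>))" using nm G0 by (rule mult_left_mono)
      also have "\<dots> = \<kappa> * W" unfolding \<kappa>_def by simp
      finally have "(1-\<beta>)*W*real n/real t \<le> real (card (covered Tall))" using cge by linarith
      then show ?thesis using tiling unfolding W_def R_def n_def \<beta>_def by blast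
      qed
    qed
  qed
qed


end
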